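(* Let $\mathcal X$ be a finite alphabet and let $(\mathcal F_n)_{n\ge1}$, $\mathcal F_n\subseteq\mathcal P(\mathcal X^n)$, be a sequence of sets of probability distributions satisfying: (1) each $\mathcal F_n$ is convex and closed; (2) $\mathcal F_1$ contains a distribution with full support on $\mathcal X$; (3) if $q\in\mathcal F_{n+1}$ then its marginal on the first $n$ symbols lies in $\mathcal F_n$; (4) if $q\in\mathcal F_n$ and $q'\in\mathcal F_m$ then $q\otimes q'\in\mathcal F_{n+m}$; (5) each $\mathcal F_n$ is invariant under permutations of the $n$ coordinates; (6) for every $p\in\mathcal P(\mathcal X)$ with $p\notin\mathcal F_1$, $D^\infty(p\|\mathcal F):=\lim_{n\to\infty}\frac1n\inf_{q\in\mathcal F_n}D(p^{\otimes n}\|q)>0$. Then for all $p\in\mathcal P(\mathcal X)$ and all $\varepsilon\in(0,1)$, \[ \lim_{n\to\infty}\frac1n D_H^\varepsilon(\mathcal F_n\,\|\,p^{\otimes n}) = D(\mathcal F\|p):=\min_{q\in\mathcal F_1}D(q\|p), \] and in particular $\mathrm{Sanov}(p\|\mathcal F)=D(\mathcal F\|p)$.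
   Context: $\mathcal P(\mathcal Y)$ is the set of probability distributions on a finite set $\mathcal Y$; $D(q\|p)=\sum_x q(x)\log(q(x)/p(x))$ is the Kullback–Leibler divergence ($+\infty$ if $q\not\ll p$). For distributions $q,r$ on $\mathcal X^n$, $D_H^\varepsilon(q\|r)=-\log\min\{\sum_{x^n}a(x^n)r(x^n): a:\mathcal X^n\to[0,1],\ \sum_{x^n}(1-a(x^n))q(x^n)\le\varepsilon\}$, and $D_H^\varepsilon(\mathcal F_n\|r)=\inf_{q\in\mathcal F_n}D_H^\varepsilon(q\|r)$. $\mathrm{Sanov}(p\|\mathcal F)=\lim_{\varepsilon\to0^+}\liminf_{n\to\infty}\frac1nD_H^\varepsilon(\mathcal F_n\|p^{\otimes n})$. *)

theory Defs
  imports "HOL-Analysis.Analysis" "HOL-Combinatorics.Permutations"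
begin

text \<open>Strings of length n over the finite alphabet 'a represent X^n.
  A distribution on X^n is a real function on 'a list vanishing off strings of length n.\<close>

definition strings :: "nat \<Rightarrow> 'a list set" where
  "strings n = {xs. length xs = n}"

definition is_dist :: "nat \<Rightarrow> ('a list \<Rightarrow> real) \<Rightarrow> bool" where
  "is_dist n q \<longleftrightarrow> (\<forall>xs. 0 \<le> q xs) \<and> (\<forall>xs. length xs \<noteq> n \<longrightarrow> q xs = 0)
     \<and> (\<Sum>xs\<in>strings n. q xs) = 1"

definition is_pdist :: "('a \<Rightarrow> real) \<Rightarrow> bool" where
  "is_pdist p \<longleftrightarrow> (\<forall>x. 0 \<le> p x) \<and> (\<Sum>x\<in>UNIV. p x) = 1"

definition iid :: "nat \<Rightarrow> ('a \<Rightarrow> real) \<Rightarrow> 'a list \<Rightarrow> real" where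
  "iid n p xs = (if length xs = n then (\<Prod>x\<leftarrow>xs. p x) else 0)"

definition marginal :: "nat \<Rightarrow> ('a::finite list \<Rightarrow> real) \<Rightarrow> 'a list \<Rightarrow> real" where
  "marginal n q xs = (if length xs = n then (\<Sum>y\<in>UNIV. q (xs @ [y])) else 0)"

definition tensor :: "nat \<Rightarrow> nat \<Rightarrow> ('a list \<Rightarrow> real) \<Rightarrow> ('a list \<Rightarrow> real) \<Rightarrow> 'a list \<Rightarrow> real" where
  "tensor n m q q' zs = (if length zs = n + m then q (take n zs) * q' (drop n zs) else 0)"

definition permute_coords :: "(nat \<Rightarrow> nat) \<Rightarrow> 'a list \<Rightarrow> 'a list" where
  "permute_coords \<sigma> xs = map (\<lambda>i. xs ! \<sigma> i) [0..<length xs]"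

definition KL :: "'b set \<Rightarrow> ('b \<Rightarrow> real) \<Rightarrow> ('b \<Rightarrow> real) \<Rightarrow> ereal" where
  "KL S q p = (if (\<forall>x\<in>S. p x = 0 \<longrightarrow> q x = 0)
      then ereal (\<Sum>x\<in>S. if q x = 0 then 0 else q x * ln (q x / p x))
      else \<infinity>)"

definition hyp_min :: "nat \<Rightarrow> real \<Rightarrow> ('a list \<Rightarrow> real) \<Rightarrow> ('a list \<Rightarrow> real) \<Rightarrow> real" where
  "hyp_min n \<epsilon> q r = Inf {(\<Sum>xs\<in>strings n. a xs * r xs) | a.
      (\<forall>xs. 0 \<le> a xs \<and> a xs \<le> 1) \<and> (\<Sum>xs\<in>strings n. (1 - a xs) * q xs) \<le> \<epsilon>}"

definition neg_log :: "real \<Rightarrow> ereal" where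
  "neg_log v = (if v \<le> 0 then \<infinity> else ereal (- ln v))"

definition DH :: "nat \<Rightarrow> real \<Rightarrow> ('a list \<Rightarrow> real) \<Rightarrow> ('a list \<Rightarrow> real) \<Rightarrow> ereal" where
  "DH n \<epsilon> q r = neg_log (hyp_min n \<epsilon> q r)"

definition DH_set :: "nat \<Rightarrow> real \<Rightarrow> ('a list \<Rightarrow> real) set \<Rightarrow> ('a list \<Rightarrow> real) \<Rightarrow> ereal" where
  "DH_set n \<epsilon> Fn r = (INF q\<in>Fn. DH n \<epsilon> q r)"

definition D_F :: "(nat \<Rightarrow> ('a list \<Rightarrow> real) set) \<Rightarrow> ('a \<Rightarrow> real) \<Rightarrow> ereal" where
  "D_F F p = (INF q\<in>F 1. KL (strings 1) q (iid 1 p))"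

definition D_reg :: "(nat \<Rightarrow> ('a list \<Rightarrow> real) set) \<Rightarrow> ('a \<Rightarrow> real) \<Rightarrow> nat \<Rightarrow> ereal" where
  "D_reg F p n = (INF q\<in>F n. KL (strings n) (iid n p) q) / ereal (real n)"

end

theory Submission
  imports Defs "HOL-Real_Asymp.Real_Asymp"
begin

lemma strings_finite: "finite (strings n :: 'a::finite list set)"
proof -
  have "strings n = {xs::'a list. set xs \<subseteq> UNIV \<and> length xs = n}"
    by (auto simp: strings_def)
  then show ?thesis using finite_lists_length_eq[of "UNIV::'a set" n] by simp
qed

lemma strings_0: "strings 0 = {[]}"
  by (auto simp: strings_def)

lemma in_strings[simp]: "xs \<in> strings n \<longleftrightarrow> length xs = n"
  by (simp add: strings_def)

lemma sum_strings_append: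
  fixes g :: "'a::finite list \<Rightarrow> 'b::comm_monoid_add"
  shows "(\<Sum>x\<in>strings (j + m). g x) = (\<Sum>y\<in>strings j. \<Sum>z\<in>strings m. g (y @ z))"
proof -
  have bij: "bij_betw (\<lambda>(y, z). y @ z) (strings j \<times> strings m) (strings (j + m))"
  proof (rule bij_betw_byWitness[where f' = "\<lambda>x. (take j x, drop j x)"])
  qed (auto simp: strings_def)
  have "(\<Sum>x\<in>strings (j + m). g x) = (\<Sum>p\<in>strings j \<times> strings m. g (case p of (y, z) \<Rightarrow> y @ z))"
    using sum.reindex_bij_betw[OF bij, of g] by (simp add: case_prod_unfold)
  also have "\<dots> = (\<Sum>(y,z)\<in>strings j \<times> strings m. g (y @ z))"
    by (rule sum.cong) auto
  also have "\<dots> = (\<Sum>y\<in>strings j. \<Sum>z\<in>strings m. g (y @ z))"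
    by (rule sum.cartesian_product[symmetric])
  finally show ?thesis .
qed

lemma strings_1: "strings 1 = (\<lambda>b. [b]) ` UNIV"
  by (auto simp: strings_def length_Suc_conv)

lemma sum_strings_1:
  fixes g :: "'a::finite list \<Rightarrow> 'b::comm_monoid_add"
  shows "(\<Sum>x\<in>strings 1. g x) = (\<Sum>b\<in>UNIV. g [b])"
  by (subst strings_1) (simp add: sum.reindex inj_on_def)

lemma sum_strings_1':
  fixes g :: "'a::finite list \<Rightarrow> 'b::comm_monoid_add"
  shows "(\<Sum>x\<in>strings (Suc 0). g x) = (\<Sum>b\<in>UNIV. g [b])"
  using sum_strings_1 by simp

lemma sum_strings_Suc_cons:
  fixes g :: "'a::finite list \<Rightarrow> 'b::comm_monoid_add"
  shows "(\<Sum>x\<in>strings (Suc m). g x) = (\<Sum>b\<in>UNIV. \<Sum>z\<in>strings m. g (b # z))"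
  using sum_strings_append[of g 1 m] by (simp add: sum_strings_1')

lemma sum_strings_Suc_snoc:
  fixes g :: "'a::finite list \<Rightarrow> 'b::comm_monoid_add"
  shows "(\<Sum>x\<in>strings (Suc m). g x) = (\<Sum>z\<in>strings m. \<Sum>b\<in>UNIV. g (z @ [b]))"
  using sum_strings_append[of g m 1] by (simp add: sum_strings_1')

lemma sum_prod_strings:
  fixes f :: "'a::finite \<Rightarrow> real"
  shows "(\<Sum>x\<in>strings n. prod_list (map f x)) = (\<Sum>b\<in>UNIV. f b) ^ n"
proof (induction n)
  case 0 then show ?case by (simp add: strings_0)
next
  case (Suc n)
  have "(\<Sum>x\<in>strings (Suc n). prod_list (map f x)) = (\<Sum>b\<in>UNIV. \<Sum>z\<in>strings n. f b * prod_list (map f z))"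
    by (simp add: sum_strings_Suc_cons)
  also have "\<dots> = (\<Sum>b\<in>UNIV. f b) * (\<Sum>b\<in>UNIV. f b) ^ n"
    by (simp add: sum_distrib_left[symmetric] Suc sum_distrib_right)
  finally show ?case by simp
qed

lemma iid_eq: "length xs = n \<Longrightarrow> iid n p xs = prod_list (map p xs)"
  by (simp add: iid_def)

lemma iid_nonneg: "is_pdist p \<Longrightarrow> 0 \<le> iid n p xs"
  by (auto simp: iid_def is_pdist_def intro!: prod_list_nonneg)

lemma sum_iid: fixes p :: "'a::finite \<Rightarrow> real" shows "is_pdist p \<Longrightarrow> (\<Sum>x\<in>strings n. iid n p x) = 1"
  using sum_prod_strings[of p n] by (simp add: iid_def is_pdist_def)

lemma iid_dist: fixes p :: "'a::finite \<Rightarrow> real" shows "is_pdist p \<Longrightarrow> is_dist n (iid n p)"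
  by (auto simp: is_dist_def iid_nonneg sum_iid) (simp add: iid_def)

lemma prod_list_count:
  fixes p :: "'a::finite \<Rightarrow> real"
  shows "prod_list (map p xs) = (\<Prod>b\<in>UNIV. p b ^ count_list xs b)"
proof (induction xs)
  case Nil then show ?case by simp
next
  case (Cons a xs)
  have "(\<Prod>b\<in>UNIV. p b ^ count_list (a # xs) b) = (\<Prod>b\<in>UNIV. (if b = a then p b else 1) * p b ^ count_list xs b)"
    by (intro prod.cong) auto
  also have "\<dots> = p a * (\<Prod>b\<in>UNIV. p b ^ count_list xs b)"
    by (simp add: prod.distrib prod.delta)
  finally show ?case by (simp add: Cons)
qed

lemma count_list_sum:
  "real (count_list z b) = (\<Sum>i<length z. if z ! i = b then 1 else 0)"
proof (induction z rule: rev_induct)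
  case Nil then show ?case by simp
next
  case (snoc a z)
  then show ?case by (simp add: nth_append)
qed


lemma prod_list_map_mult:
  "prod_list (map (\<lambda>b. f b * g b) xs) = prod_list (map f xs) * (prod_list (map g xs) :: real)"
  by (induction xs) auto

lemma prod_list_map_nonneg:
  fixes f :: "'b \<Rightarrow> real"
  shows "(\<And>b. 0 \<le> f b) \<Longrightarrow> 0 \<le> prod_list (map f xs)"
  by (induction xs) auto

lemma prod_list_map_powr:
  fixes f :: "'b \<Rightarrow> real"
  assumes "\<And>b. 0 \<le> f b"
  shows "prod_list (map (\<lambda>b. f b powr s) xs) = prod_list (map f xs) powr s"
proof (induction xs)
  case (Cons a xs)
  have "0 \<le> prod_list (map f xs)" using prod_list_map_nonneg[of f xs] assms by blast
  then show ?case using Cons assms[of a] by (simp add: powr_mult)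
qed simp

lemma prod_list_pos:
  "(\<And>b. b \<in> set xs \<Longrightarrow> 0 < f b) \<Longrightarrow> 0 < prod_list (map f xs :: real list)"
  by (induction xs) auto

lemma prod_list_zero_iff:
  "prod_list (map f xs) = (0::real) \<longleftrightarrow> (\<exists>b\<in>set xs. f b = 0)"
  by (induction xs) auto

lemma hyp_lower:
  fixes r p :: "'a::finite \<Rightarrow> real"
  assumes r: "is_pdist r" and p: "is_pdist p" and supp: "\<forall>b. p b = 0 \<longrightarrow> r b = 0"
    and eps: "0 < \<epsilon>" "\<epsilon> < 1" and dl: "\<delta> > 0"
  defines "D \<equiv> \<Sum>b\<in>UNIV. if r b = 0 then 0 else r b * ln (r b / p b)"
  shows "\<forall>\<^sub>F n in sequentially. hyp_min n \<epsilon> (iid n r) (iid n p) \<ge> exp (-(real n * (D+\<delta>))) * ((1-\<epsilon>)/2)"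
proof -
  have r0: "\<And>b. 0 \<le> r b" and p0: "\<And>b. 0 \<le> p b" using r p by (auto simp: is_pdist_def)
  have rs: "(\<Sum>b\<in>UNIV. r b) = 1" using r by (simp add: is_pdist_def)
  define g where "g s = (\<Sum>b\<in>UNIV. r b * exp (s * ln (r b / p b)))" for s
  have g0: "g 0 = 1" using rs by (simp add: g_def)
  have gnn: "0 \<le> g s" for s unfolding g_def by (intro sum_nonneg) (simp add: r0)
  have dg: "DERIV g 0 :> D"
  proof -
    have "DERIV g 0 :> (\<Sum>b\<in>UNIV. r b * (ln (r b / p b) * exp (0 * ln (r b / p b))))"
      unfolding g_def by (auto intro!: derivative_eq_intros) (rule sum.cong, auto)
    also have "(\<Sum>b\<in>UNIV. r b * (ln (r b / p b) * exp (0 * ln (r b / p b)))) = D"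
      unfolding D_def by (intro sum.cong) (auto simp: mult.commute)
    finally show ?thesis .
  qed
  have dphi: "DERIV (\<lambda>s. g s - exp (s * (D + \<delta>))) 0 :> D - 1 * (D + \<delta>)"
    by (auto intro!: derivative_eq_intros dg)
  obtain d where d: "d > 0" "\<And>h. h > 0 \<Longrightarrow> h < d \<Longrightarrow> g (0 + h) - exp ((0 + h) * (D + \<delta>)) < g 0 - exp (0 * (D + \<delta>))"
    using DERIV_neg_dec_right[OF dphi] dl by auto
  define s where "s = d / 2"
  have s0: "s > 0" using d by (simp add: s_def)
  have gs: "g s < exp (s * (D + \<delta>))" using d(2)[of s] d(1) g0 by (simp add: s_def)
  define \<theta> where "\<theta> = g s * exp (- (s * (D + \<delta>)))"
  have th0: "0 \<le> \<theta>" by (simp add: \<theta>_def gnn)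
  have "g s * exp (-(s*(D+\<delta>))) < exp (s*(D+\<delta>)) * exp(-(s*(D+\<delta>)))"
    by (rule mult_strict_right_mono[OF gs]) simp
  then have th1: "\<theta> < 1" by (simp add: \<theta>_def exp_add[symmetric])
  have "(\<lambda>n. \<theta> ^ n) \<longlonglongrightarrow> 0" using th0 th1 by (intro LIMSEQ_power_zero) auto
  then have ev: "\<forall>\<^sub>F n in sequentially. \<theta> ^ n < (1 - \<epsilon>) / 2"
    using eps by (intro order_tendstoD) auto
  show ?thesis
    using ev
  proof (rule eventually_mono)
    fix n assume thn: "\<theta> ^ n < (1 - \<epsilon>) / 2"
    define \<gamma> where "\<gamma> = exp (real n * (D + \<delta>))"
    have gpos: "\<gamma> > 0" by (simp add: \<gamma>_def)
    define h where "h x = prod_list (map (\<lambda>b. r b * exp (s * ln (r b / p b))) x)" for x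
    have sumh: "(\<Sum>x\<in>strings n. h x) = g s ^ n"
      unfolding h_def g_def by (rule sum_prod_strings)
    have hnn: "0 \<le> h x" for x unfolding h_def by (intro prod_list_nonneg) (auto simp: r0)
    let ?S = "{(\<Sum>xs\<in>strings n. a xs * iid n p xs) | a.
      (\<forall>xs. 0 \<le> a xs \<and> a xs \<le> 1) \<and> (\<Sum>xs\<in>strings n. (1 - a xs) * iid n r xs) \<le> \<epsilon>}"
    have "exp (-(real n * (D+\<delta>))) * ((1-\<epsilon>)/2) \<le> Inf ?S"
    proof (rule cInf_greatest)
      show "?S \<noteq> {}"
        using eps by (auto intro!: exI[of _ "\<lambda>_. 1"])
    next
      fix v assume "v \<in> ?S"
      then obtain a where v: "v = (\<Sum>xs\<in>strings n. a xs * iid n p xs)"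
        and a01: "\<And>xs. 0 \<le> a xs \<and> a xs \<le> 1"
        and aeps: "(\<Sum>xs\<in>strings n. (1 - a xs) * iid n r xs) \<le> \<epsilon>" by auto
      have pw: "a x * iid n r x \<le> \<gamma> * (a x * iid n p x) + exp (- (s * (real n * (D + \<delta>)))) * h x"
        if x: "x \<in> strings n" for x
      proof (cases "iid n r x = 0")
        case True
        then show ?thesis using a01[of x] hnn[of x] gpos iid_nonneg[OF p, of n x] by simp
      next
        case False
        have lx: "length x = n" using x by simp
        have rpos: "\<And>b. b \<in> set x \<Longrightarrow> r b > 0"
          using False r0 by (auto simp: iid_eq[OF lx] prod_list_zero_iff order_le_less)
        have ppos: "\<And>b. b \<in> set x \<Longrightarrow> p b > 0"
          using rpos supp p0 by (metis order_le_less order_less_irrefl)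
        define R where "R = prod_list (map (\<lambda>b. r b / p b) x)"
        have Rpos: "R > 0" unfolding R_def using rpos ppos by (intro prod_list_pos) auto
        have qPR: "iid n r x = iid n p x * R"
        proof -
          have "iid n r x = prod_list (map (\<lambda>b. p b * (r b / p b)) x)"
            unfolding iid_eq[OF lx] by (intro arg_cong[where f=prod_list] map_cong) (auto dest!: ppos)
          also have "\<dots> = iid n p x * R" unfolding R_def iid_eq[OF lx] by (rule prod_list_map_mult)
          finally show ?thesis .
        qed
        have hx: "h x = iid n r x * R powr s"
        proof -
          have "h x = prod_list (map (\<lambda>b. r b * (r b / p b) powr s) x)"
            unfolding h_def using rpos ppos
            by (intro arg_cong[where f=prod_list] map_cong) (auto simp: powr_def supp)
          also have "\<dots> = iid n r x * R powr s"
            by (simp add: prod_list_map_mult R_def iid_eq[OF lx] prod_list_map_powr p0 r0)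
          finally show ?thesis .
        qed
        have qnn: "0 \<le> iid n r x" by (rule iid_nonneg[OF r])
        have pnn: "0 \<le> iid n p x" by (rule iid_nonneg[OF p])
        show ?thesis
        proof (cases "R \<le> \<gamma>")
          case True
          have "a x * iid n r x = (a x * iid n p x) * R" by (simp add: qPR)
          also have "\<dots> \<le> (a x * iid n p x) * \<gamma>"
            using True a01[of x] pnn by (intro mult_left_mono) auto
          finally have "a x * iid n r x \<le> \<gamma> * (a x * iid n p x)" by (simp add: mult.commute)
          moreover have "0 \<le> exp (- (s * (real n * (D + \<delta>)))) * h x" using hnn[of x] by simp
          ultimately show ?thesis by linarith
        next
          case False
          have "a x * iid n r x \<le> iid n r x" using a01[of x] qnn by (simp add: mult_left_le_one_le)
          also have "\<dots> \<le> iid n r x * (R / \<gamma>) powr s"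
          proof -
            have "1 \<le> R / \<gamma>" using False gpos by simp
            then have "1 \<le> (R / \<gamma>) powr s" using s0 by (intro ge_one_powr_ge_zero) auto
            then show ?thesis using qnn by (simp add: mult_le_cancel_left1)
          qed
          also have "(R / \<gamma>) powr s = R powr s * exp (- (s * (real n * (D + \<delta>))))"
          proof -
            have "(R/\<gamma>) powr s = R powr s / \<gamma> powr s" using Rpos gpos by (simp add: powr_divide)
            moreover have "\<gamma> powr s = exp (s * (real n * (D+\<delta>)))" by (simp add: \<gamma>_def powr_def)
            ultimately show ?thesis by (simp add: exp_minus divide_inverse)
          qed
          finally show ?thesis using hx gpos pnn a01[of x]
            by (smt (verit, best) mult.commute mult.left_commute mult_nonneg_nonneg)
        qed
      qed
      have "(\<Sum>x\<in>strings n. a x * iid n r x) \<le> (\<Sum>x\<in>strings n. \<gamma> * (a x * iid n p x) + exp (- (s * (real n * (D + \<delta>)))) * h x)"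
        by (intro sum_mono pw)
      also have "\<dots> = \<gamma> * v + exp (- (s * (real n * (D + \<delta>)))) * g s ^ n"
        by (simp add: sum.distrib sum_distrib_left[symmetric] v sumh)
      also have "exp (- (s * (real n * (D + \<delta>)))) * g s ^ n = \<theta> ^ n"
        unfolding \<theta>_def power_mult_distrib
        by (simp add: exp_of_nat_mult[symmetric] mult_ac)
      finally have A: "(\<Sum>x\<in>strings n. a x * iid n r x) \<le> \<gamma> * v + \<theta> ^ n" .
      have "(\<Sum>x\<in>strings n. (1 - a x) * iid n r x) = 1 - (\<Sum>x\<in>strings n. a x * iid n r x)"
        using sum_iid[OF r, of n] by (simp add: left_diff_distrib sum_subtractf)
      then have "1 - \<epsilon> \<le> \<gamma> * v + \<theta> ^ n" using aeps A by linarith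
      then have "(1 - \<epsilon>) / 2 \<le> \<gamma> * v" using thn by (smt (verit) field_sum_of_halves)
      then have "(1 - \<epsilon>) / 2 \<le> v * \<gamma>" by (simp only: mult.commute)
      then have le: "(1 - \<epsilon>) / 2 / \<gamma> \<le> v" using pos_divide_le_eq[OF gpos] by blast
      have eq: "exp (-(real n * (D+\<delta>))) * ((1-\<epsilon>)/2) = (1 - \<epsilon>) / 2 / \<gamma>"
        unfolding \<gamma>_def by (simp add: exp_minus inverse_eq_divide)
      show "exp (-(real n * (D+\<delta>))) * ((1-\<epsilon>)/2) \<le> v" by (subst eq) (rule le)
    qed
    then show "exp (-(real n * (D+\<delta>))) * ((1-\<epsilon>)/2) \<le> hyp_min n \<epsilon> (iid n r) (iid n p)"
      by (simp add: hyp_min_def)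
  qed
qed


lemma pdist_of_dist1:
  fixes q :: "'a::finite list \<Rightarrow> real"
  assumes "is_dist 1 q" shows "is_pdist (\<lambda>b. q [b])"
  using assms by (simp add: is_dist_def is_pdist_def sum_strings_1')

lemma iid1_eq:
  fixes q :: "'a::finite list \<Rightarrow> real"
  assumes "is_dist 1 q" shows "iid 1 (\<lambda>b. q [b]) = q"
proof
  fix xs :: "'a list"
  show "iid 1 (\<lambda>b. q [b]) xs = q xs"
  proof (cases "length xs = 1")
    case True
    then obtain b where "xs = [b]" by (auto simp: length_Suc_conv)
    then show ?thesis by (simp add: iid_def)
  next
    case False
    then show ?thesis using assms by (simp add: iid_def is_dist_def)
  qed
qed

lemma iid_tensor: "iid (n + 1) r = tensor n 1 (iid n r) (iid 1 r)"
proof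
  fix zs :: "'a list"
  show "iid (n + 1) r zs = tensor n 1 (iid n r) (iid 1 r) zs"
  proof (cases "length zs = n + 1")
    case True
    have "prod_list (map r zs) = prod_list (map r (take n zs)) * prod_list (map r (drop n zs))"
      by (metis append_take_drop_id map_append prod_list.append)
    then show ?thesis using True by (simp add: iid_def tensor_def)
  next
    case False
    then show ?thesis by (simp add: iid_def tensor_def)
  qed
qed

lemma iid_in_F:
  assumes tens: "\<And>n m q q'. n \<ge> 1 \<Longrightarrow> m \<ge> 1 \<Longrightarrow> q \<in> F n \<Longrightarrow> q' \<in> F m
        \<Longrightarrow> tensor n m q q' \<in> F (n + m)"
    and one: "iid 1 r \<in> F 1" and n: "n \<ge> 1"
  shows "iid n r \<in> F n"
  using n
proof (induction n rule: dec_induct)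
  case base then show ?case by (rule one)
next
  case (step n)
  then show ?case using tens[OF step(1) _ step(3) one] iid_tensor[of n r] by simp
qed

lemma iid_single[simp]: "iid 1 r [x] = r x"
  by (simp add: iid_def)

lemma iid_single'[simp]: "iid (Suc 0) r [x] = r x"
  by (simp add: iid_def)

lemma KL1:
  fixes r p :: "'a::finite \<Rightarrow> real"
  shows "KL (strings 1) (iid 1 r) (iid 1 p) = (if \<forall>b. p b = 0 \<longrightarrow> r b = 0
     then ereal (\<Sum>b\<in>UNIV. if r b = 0 then 0 else r b * ln (r b / p b)) else \<infinity>)"
proof -
  have inj: "inj (\<lambda>b::'a. [b])" by (simp add: inj_on_def)
  have A: "(\<forall>x\<in>strings 1. iid 1 p x = 0 \<longrightarrow> iid 1 r x = 0) \<longleftrightarrow> (\<forall>b. p b = 0 \<longrightarrow> r b = 0)"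
    unfolding strings_1 by simp
  have B: "(\<Sum>x\<in>strings 1. if iid 1 r x = 0 then 0 else iid 1 r x * ln (iid 1 r x / iid 1 p x))
     = (\<Sum>b\<in>UNIV. if r b = 0 then 0 else r b * ln (r b / p b))"
    unfolding strings_1 sum.reindex[OF inj] comp_def iid_single ..
  show ?thesis unfolding KL_def A B ..
qed

lemma ereal_div_le:
  assumes "a \<le> ereal b" "n > 0"
  shows "a / ereal (real n) \<le> ereal (b / real n)"
proof -
  have "a / ereal (real n) \<le> ereal b / ereal (real n)"
    using assms by (intro ereal_divide_right_mono) auto
  then show ?thesis using assms(2) by simp
qed

lemma neg_log_le:
  assumes "B > 0" "B \<le> v" shows "neg_log v \<le> ereal (- ln B)"
  using assms by (simp add: neg_log_def)

lemma upper_bound: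
  fixes F :: "nat \<Rightarrow> ('a::finite list \<Rightarrow> real) set"
  assumes dist: "\<And>n q. n \<ge> 1 \<Longrightarrow> q \<in> F n \<Longrightarrow> is_dist n q"
    and tens: "\<And>n m q q'. n \<ge> 1 \<Longrightarrow> m \<ge> 1 \<Longrightarrow> q \<in> F n \<Longrightarrow> q' \<in> F m
        \<Longrightarrow> tensor n m q q' \<in> F (n + m)"
    and p: "is_pdist p" and eps: "0 < \<epsilon>" "\<epsilon> < 1" and u: "D_F F p < u"
  shows "\<forall>\<^sub>F n in sequentially. DH_set n \<epsilon> (F n) (iid n p) / ereal (real n) < u"
proof -
  obtain q where q: "q \<in> F 1" and qu: "KL (strings 1) q (iid 1 p) < u"
    using u by (auto simp: D_F_def INF_less_iff)
  define r where "r b = q [b]" for b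
  have qd: "is_dist 1 q" using dist q by simp
  have r: "is_pdist r" unfolding r_def by (rule pdist_of_dist1[OF qd])
  have qr: "iid 1 r = q" unfolding r_def by (rule iid1_eq[OF qd])
  define D where "D = (\<Sum>b\<in>UNIV. if r b = 0 then 0 else r b * ln (r b / p b))"
  have supp: "\<forall>b. p b = 0 \<longrightarrow> r b = 0" and Du: "ereal D < u"
    using qu unfolding qr[symmetric] KL1 D_def by (auto split: if_splits)
  obtain w where w: "ereal D < ereal w" "ereal w < u" using ereal_dense2[OF Du] by auto
  define \<delta> where "\<delta> = (w - D) / 2"
  have dpos: "\<delta> > 0" using w by (simp add: \<delta>_def)
  define C where "C = - ln ((1 - \<epsilon>) / 2)"
  have ev1: "\<forall>\<^sub>F n in sequentially. hyp_min n \<epsilon> (iid n r) (iid n p) \<ge> exp (-(real n * (D+\<delta>))) * ((1-\<epsilon>)/2)"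
    using hyp_lower[OF r p supp eps dpos] unfolding D_def .
  have "(\<lambda>n. C / real n) \<longlonglongrightarrow> 0" by (rule lim_const_over_n)
  then have ev2: "\<forall>\<^sub>F n in sequentially. C / real n < \<delta>" using dpos by (intro order_tendstoD) auto
  have ev3: "\<forall>\<^sub>F n in sequentially. n \<ge> 1" by (rule eventually_ge_at_top)
  show ?thesis using ev1 ev2 ev3
  proof eventually_elim
    case (elim n)
    have r1: "iid 1 r \<in> F 1" using q qr by simp
    have rn: "iid n r \<in> F n" by (rule iid_in_F[OF tens r1 elim(3)])
    define B where "B = exp (-(real n * (D+\<delta>))) * ((1-\<epsilon>)/2)"
    have Bpos: "B > 0" using eps by (simp add: B_def)
    have "DH_set n \<epsilon> (F n) (iid n p) \<le> DH n \<epsilon> (iid n r) (iid n p)"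
      unfolding DH_set_def using rn by (rule INF_lower)
    also have "\<dots> \<le> ereal (- ln B)"
      unfolding DH_def
    proof (rule neg_log_le[OF Bpos])
      show "B \<le> hyp_min n \<epsilon> (iid n r) (iid n p)" unfolding B_def by (rule elim(1))
    qed
    also have "- ln B = real n * (D + \<delta>) + C"
    proof -
      have "ln B = ln (exp (-(real n * (D+\<delta>)))) + ln ((1-\<epsilon>)/2)"
        unfolding B_def using eps by (intro ln_mult_pos) auto
      then show ?thesis unfolding C_def by simp
    qed
    finally have "DH_set n \<epsilon> (F n) (iid n p) / ereal (real n) \<le> ereal ((real n * (D + \<delta>) + C) / real n)"
      using elim(3) by (intro ereal_div_le) auto
    also have "(real n * (D + \<delta>) + C) / real n = D + \<delta> + C / real n"
      using elim(3) by (simp add: add_divide_distrib)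
    also have "ereal (D + \<delta> + C / real n) < ereal w"
    proof -
      have "D + \<delta> + C / real n < D + \<delta> + \<delta>" using elim(2) by simp
      also have "D + \<delta> + \<delta> = w" by (simp add: \<delta>_def)
      finally have "D + \<delta> + C / real n < w" .
      then show ?thesis by simp
    qed
    finally show ?case using w(2) by simp
  qed
qed


definition ctype :: "nat \<Rightarrow> 'a list \<Rightarrow> 'a \<Rightarrow> real" where
  "ctype n x = (\<lambda>b. real (count_list x b) / real n)"

definition sym_on :: "nat \<Rightarrow> ('a list \<Rightarrow> real) \<Rightarrow> bool" where
  "sym_on n f \<longleftrightarrow> (\<forall>w \<sigma>. length w = n \<longrightarrow> \<sigma> permutes {..<n} \<longrightarrow> f (permute_list \<sigma> w) = f w)"

lemma permute_coords_eq: "permute_coords = permute_list"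
  by (intro ext) (simp add: permute_coords_def permute_list_def)

lemma count_permute_list:
  assumes "\<sigma> permutes {..<length x}"
  shows "count_list (permute_list \<sigma> x) b = count_list x b"
  using mset_permute_list[OF assms] by (metis count_mset)

lemma ctype_permute_list:
  assumes "\<sigma> permutes {..<length x}"
  shows "ctype n (permute_list \<sigma> x) = ctype n x"
  using count_permute_list[OF assms] by (simp add: ctype_def)

lemma permute_list_inv_cancel:
  assumes "\<sigma> permutes {..<length x}"
  shows "permute_list (inv \<sigma>) (permute_list \<sigma> x) = x"
proof -
  have "inv \<sigma> permutes {..<length x}" by (rule permutes_inv[OF assms])
  then have "permute_list (inv \<sigma>) (permute_list \<sigma> x) = permute_list (\<sigma> \<circ> inv \<sigma>) x"
    by (simp add: permute_list_compose)
  also have "\<sigma> \<circ> inv \<sigma> = id" using permutes_inv_o(1)[OF assms] .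
  finally show ?thesis by simp
qed

lemma sum_permute_list_reindex:
  fixes g :: "'a::finite list \<Rightarrow> real"
  assumes "\<sigma> permutes {..<n}"
  shows "(\<Sum>x\<in>strings n. g (permute_list \<sigma> x)) = (\<Sum>x\<in>strings n. g x)"
proof (rule sum.reindex_bij_witness[where i = "permute_list (inv \<sigma>)" and j = "permute_list \<sigma>"])
  fix x assume "x \<in> strings n"
  then have l: "length x = n" by simp
  show "permute_list (inv \<sigma>) (permute_list \<sigma> x) = x"
    using permute_list_inv_cancel[of \<sigma> x] assms l by simp
  show "permute_list \<sigma> x \<in> strings n" using l by simp
next
  fix x assume "x \<in> strings n"
  then have l: "length x = n" by simp
  have ip: "inv \<sigma> permutes {..<length x}" using permutes_inv[OF assms] l by simp
  have "permute_list \<sigma> (permute_list (inv \<sigma>) x) = permute_list (inv (inv \<sigma>)) (permute_list (inv \<sigma>) x)"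
    using assms by (simp add: inv_inv_eq permutes_bij)
  also have "\<dots> = x" using permute_list_inv_cancel[OF ip] .
  finally show "permute_list \<sigma> (permute_list (inv \<sigma>) x) = x" .
  show "permute_list (inv \<sigma>) x \<in> strings n" using l by simp
qed simp

lemma avg_in_F:
  fixes F :: "nat \<Rightarrow> ('a list \<Rightarrow> real) set"
  assumes convex: "\<And>n q r t. n \<ge> 1 \<Longrightarrow> q \<in> F n \<Longrightarrow> r \<in> F n \<Longrightarrow> 0 \<le> t \<Longrightarrow> t \<le> 1
        \<Longrightarrow> (\<lambda>xs. t * q xs + (1 - t) * r xs) \<in> F n"
    and n: "n \<ge> 1" and fin: "finite P" and ne: "P \<noteq> {}" and g: "\<And>\<sigma>. \<sigma> \<in> P \<Longrightarrow> g \<sigma> \<in> F n"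
  shows "(\<lambda>x. (\<Sum>\<sigma>\<in>P. g \<sigma> x) / real (card P)) \<in> F n"
  using fin ne g
proof (induction P rule: finite_ne_induct)
  case (singleton \<sigma>)
  then show ?case by simp
next
  case (insert \<sigma> P)
  define c where "c = real (card P)"
  have cpos: "c > 0" using insert by (simp add: c_def card_gt_0_iff)
  define t where "t = 1 / (c + 1)"
  have t: "0 \<le> t" "t \<le> 1" using cpos by (auto simp: t_def)
  have "(\<lambda>xs. t * g \<sigma> xs + (1 - t) * ((\<Sum>\<sigma>\<in>P. g \<sigma> xs) / real (card P))) \<in> F n"
    using convex[OF n insert.prems[of \<sigma>] insert.IH t] insert.prems by simp
  moreover have "(\<lambda>xs. t * g \<sigma> xs + (1 - t) * ((\<Sum>\<sigma>\<in>P. g \<sigma> xs) / real (card P)))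
      = (\<lambda>x. (\<Sum>\<sigma>\<in>insert \<sigma> P. g \<sigma> x) / real (card (insert \<sigma> P)))"
  proof
    fix x
    show "t * g \<sigma> x + (1 - t) * ((\<Sum>\<sigma>\<in>P. g \<sigma> x) / real (card P))
      = (\<Sum>\<sigma>\<in>insert \<sigma> P. g \<sigma> x) / real (card (insert \<sigma> P))"
    proof -
      have e1: "(\<Sum>\<sigma>\<in>insert \<sigma> P. g \<sigma> x) = g \<sigma> x + (\<Sum>\<sigma>\<in>P. g \<sigma> x)" using insert by simp
      have e2: "real (card (insert \<sigma> P)) = c + 1" using insert by (simp add: c_def)
      have t1: "1 - t = c / (c + 1)" unfolding t_def using cpos by (simp add: field_simps)
      have "(1 - t) * ((\<Sum>\<sigma>\<in>P. g \<sigma> x) / c) = (\<Sum>\<sigma>\<in>P. g \<sigma> x) / (c + 1)"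
        unfolding t1 using cpos by simp
      then have "t * g \<sigma> x + (1 - t) * ((\<Sum>\<sigma>\<in>P. g \<sigma> x) / c) = (g \<sigma> x + (\<Sum>\<sigma>\<in>P. g \<sigma> x)) / (c + 1)"
        unfolding t_def by (simp add: add_divide_distrib)
      then show ?thesis unfolding e1 e2 c_def .
    qed
  qed
  ultimately show ?case by simp
qed


lemma symmetrize:
  fixes F :: "nat \<Rightarrow> ('a::finite list \<Rightarrow> real) set"
  assumes convex: "\<And>n q r t. n \<ge> 1 \<Longrightarrow> q \<in> F n \<Longrightarrow> r \<in> F n \<Longrightarrow> 0 \<le> t \<Longrightarrow> t \<le> 1
        \<Longrightarrow> (\<lambda>xs. t * q xs + (1 - t) * r xs) \<in> F n"
    and perm: "\<And>n q \<sigma>. n \<ge> 1 \<Longrightarrow> q \<in> F n \<Longrightarrow> \<sigma> permutes {0..<n}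
        \<Longrightarrow> (\<lambda>xs. q (permute_coords \<sigma> xs)) \<in> F n"
    and n: "n \<ge> 1" and q: "q \<in> F n"
  obtains qs where "qs \<in> F n" "sym_on n qs"
    "\<And>h. sym_on n h \<Longrightarrow> (\<Sum>x\<in>strings n. h x * qs x) = (\<Sum>x\<in>strings n. h x * q x)"
proof -
  define PP where "PP = {\<sigma>. \<sigma> permutes {..<n}}"
  have finPP: "finite PP" unfolding PP_def by (rule finite_permutations) simp
  have idPP: "id \<in> PP" unfolding PP_def by (simp add: permutes_id)
  have cardPP: "card PP = fact n" unfolding PP_def using card_permutations[of "{..<n}" n] by simp
  define qs where "qs x = (\<Sum>\<sigma>\<in>PP. q (permute_list \<sigma> x)) / real (card PP)" for x
  have "(\<lambda>x. (\<Sum>\<sigma>\<in>PP. (\<lambda>xs. q (permute_list \<sigma> xs)) x) / real (card PP)) \<in> F n"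
  proof (rule avg_in_F[OF convex n finPP])
    show "PP \<noteq> {}" using idPP by auto
    fix \<sigma> assume "\<sigma> \<in> PP"
    then have "\<sigma> permutes {0..<n}" by (simp add: PP_def atLeast0LessThan)
    then show "(\<lambda>xs. q (permute_list \<sigma> xs)) \<in> F n"
      using perm[OF n q] by (simp add: permute_coords_eq)
  qed
  then have qsF: "qs \<in> F n" unfolding qs_def by simp
  have qsym: "sym_on n qs"
    unfolding sym_on_def
  proof (intro allI impI)
    fix w :: "'a list" and \<tau> assume w: "length w = n" and \<tau>: "\<tau> permutes {..<n}"
    have "(\<Sum>\<sigma>\<in>PP. q (permute_list \<sigma> (permute_list \<tau> w))) = (\<Sum>\<sigma>\<in>PP. q (permute_list (\<tau> \<circ> \<sigma>) w))"
      by (intro sum.cong refl) (simp add: PP_def permute_list_compose w)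
    also have "\<dots> = (\<Sum>\<sigma>\<in>PP. q (permute_list \<sigma> w))"
      unfolding PP_def using setum_permutations_compose_left[OF \<tau>, of "\<lambda>\<sigma>. q (permute_list \<sigma> w)"]
      by simp
    finally show "qs (permute_list \<tau> w) = qs w" by (simp add: qs_def)
  qed
  have qsum: "(\<Sum>x\<in>strings n. h x * qs x) = (\<Sum>x\<in>strings n. h x * q x)" if h: "sym_on n h" for h
  proof -
    have "(\<Sum>x\<in>strings n. h x * qs x) = (\<Sum>\<sigma>\<in>PP. \<Sum>x\<in>strings n. h x * q (permute_list \<sigma> x)) / real (card PP)"
      unfolding qs_def by (simp add: sum_divide_distrib sum_distrib_left sum.swap[of _ PP] )
    also have "(\<Sum>\<sigma>\<in>PP. \<Sum>x\<in>strings n. h x * q (permute_list \<sigma> x)) = (\<Sum>\<sigma>\<in>PP. \<Sum>x\<in>strings n. h x * q x)"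
    proof (rule sum.cong[OF refl])
      fix \<sigma> assume "\<sigma> \<in> PP"
      then have \<sigma>: "\<sigma> permutes {..<n}" by (simp add: PP_def)
      have "(\<Sum>x\<in>strings n. h x * q (permute_list \<sigma> x)) = (\<Sum>x\<in>strings n. h (permute_list \<sigma> x) * q (permute_list \<sigma> x))"
        using h \<sigma> by (intro sum.cong refl) (simp add: sym_on_def)
      also have "\<dots> = (\<Sum>x\<in>strings n. h x * q x)"
        by (rule sum_permute_list_reindex[OF \<sigma>, of "\<lambda>x. h x * q x"])
      finally show "(\<Sum>x\<in>strings n. h x * q (permute_list \<sigma> x)) = (\<Sum>x\<in>strings n. h x * q x)" .
    qed
    also have "(\<Sum>\<sigma>\<in>PP. \<Sum>x\<in>strings n. h x * q x) / real (card PP) = (\<Sum>x\<in>strings n. h x * q x)"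
    proof -
      have "card PP > 0" using finPP idPP card_gt_0_iff by blast
      then show ?thesis by simp
    qed
    finally show ?thesis .
  qed
  show ?thesis using that qsF qsym qsum by blast
qed

lemma marg_iter:
  fixes F :: "nat \<Rightarrow> ('a::finite list \<Rightarrow> real) set"
  assumes dist: "\<And>n q. n \<ge> 1 \<Longrightarrow> q \<in> F n \<Longrightarrow> is_dist n q"
    and marg: "\<And>n q. n \<ge> 1 \<Longrightarrow> q \<in> F (n + 1) \<Longrightarrow> marginal n q \<in> F n"
    and Q: "Q \<in> F n" and k: "1 \<le> k" "k \<le> n"
  shows "(\<lambda>y. if length y = k then \<Sum>z\<in>strings (n - k). Q (y @ z) else 0) \<in> F k"
proof -
  have main: "\<And>k. 1 \<le> k \<Longrightarrow> k + d = n \<Longrightarrow> (\<lambda>y. if length y = k then \<Sum>z\<in>strings (n - k). Q (y @ z) else 0) \<in> F k" for d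
  proof (induction d)
    case 0
    then have kn: "k = n" by simp
    have n1: "n \<ge> 1" using 0 by simp
    have "(\<lambda>y. if length y = k then \<Sum>z\<in>strings (n - k). Q (y @ z) else 0) = Q"
    proof
      fix y :: "'a list"
      show "(if length y = k then \<Sum>z\<in>strings (n - k). Q (y @ z) else 0) = Q y"
        using dist[OF n1 Q] kn by (auto simp: strings_0 is_dist_def)
    qed
    then show ?case using Q kn by simp
  next
    case (Suc d)
    have IH: "(\<lambda>y. if length y = k + 1 then \<Sum>z\<in>strings (n - (k + 1)). Q (y @ z) else 0) \<in> F (k + 1)"
      using Suc.IH[of "k + 1"] Suc.prems by simp
    have m: "marginal k (\<lambda>y. if length y = k + 1 then \<Sum>z\<in>strings (n - (k + 1)). Q (y @ z) else 0) \<in> F k"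
      using marg[OF Suc.prems(1) IH] .
    have "marginal k (\<lambda>y. if length y = k + 1 then \<Sum>z\<in>strings (n - (k + 1)). Q (y @ z) else 0)
      = (\<lambda>y. if length y = k then \<Sum>z\<in>strings (n - k). Q (y @ z) else 0)"
    proof
      fix y :: "'a list"
      have nk: "n - k = Suc (n - (k + 1))" using Suc.prems by simp
      show "marginal k (\<lambda>y. if length y = k + 1 then \<Sum>z\<in>strings (n - (k + 1)). Q (y @ z) else 0) y
        = (if length y = k then \<Sum>z\<in>strings (n - k). Q (y @ z) else 0)"
        unfolding marginal_def nk sum_strings_Suc_cons by simp
    qed
    then show ?case using m by simp
  qed
  show ?thesis using main[of k "n - k"] k by simp
qed

lemma permute_list_transpose_append:
  assumes y: "length y = j" and i: "i < length z"
  shows "permute_list (Transposition.transpose j (j + i)) (y @ z) = y @ permute_list (Transposition.transpose 0 i) z"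
proof (rule nth_equalityI)
  show "length (permute_list (Transposition.transpose j (j + i)) (y @ z)) = length (y @ permute_list (Transposition.transpose 0 i) z)"
    by simp
next
  fix l assume "l < length (permute_list (Transposition.transpose j (j + i)) (y @ z))"
  then have l: "l < length y + length z" by simp
  show "permute_list (Transposition.transpose j (j + i)) (y @ z) ! l = (y @ permute_list (Transposition.transpose 0 i) z) ! l"
  proof (cases "l < j")
    case True
    then show ?thesis using y l
      by (simp add: permute_list_def nth_append transpose_def)
  next
    case False
    then obtain l' where l': "l = j + l'" by (metis le_iff_add not_less)
    have "Transposition.transpose j (j + i) (j + l') = j + Transposition.transpose 0 i l'"
      by (cases "l' = 0"; cases "l' = i") (auto simp: transpose_def)
    moreover have "Transposition.transpose 0 i l' < length z" using l l' y i
      by (cases "l' = 0"; cases "l' = i") (auto simp: transpose_def)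
    ultimately show ?thesis using y l l'
      by (simp add: permute_list_def nth_append)
  qed
qed

lemma sym_count:
  fixes f :: "'a::finite list \<Rightarrow> real"
  assumes sym: "sym_on n f" and y: "length y = j" and jn: "j < n"
  shows "(\<Sum>z\<in>strings (n - j). f (y @ z) * real (count_list z b)) = real (n - j) * (\<Sum>z\<in>strings (n - j - 1). f (y @ b # z))"
proof -
  define m where "m = n - j"
  have m0: "m = Suc (m - 1)" using jn by (simp add: m_def)
  have "(\<Sum>z\<in>strings m. f (y @ z) * real (count_list z b)) = (\<Sum>z\<in>strings m. \<Sum>i<m. if z ! i = b then f (y @ z) else 0)"
    by (intro sum.cong refl) (simp add: count_list_sum sum_distrib_left if_distrib cong: if_cong)
  also have "\<dots> = (\<Sum>i<m. \<Sum>z\<in>strings m. if z ! i = b then f (y @ z) else 0)"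
    by (rule sum.swap)
  also have "\<dots> = (\<Sum>i<m. \<Sum>z\<in>strings m. if z ! 0 = b then f (y @ z) else 0)"
  proof (rule sum.cong[OF refl])
    fix i assume "i \<in> {..<m}"
    then have i: "i < m" by simp
    define \<tau> where "\<tau> = Transposition.transpose (0::nat) i"
    have \<tau>p: "\<tau> permutes {..<m}" unfolding \<tau>_def using i by (intro permutes_swap_id) auto
    have "(\<Sum>z\<in>strings m. if z ! i = b then f (y @ z) else 0)
        = (\<Sum>z\<in>strings m. if permute_list \<tau> z ! i = b then f (y @ permute_list \<tau> z) else 0)"
      using sum_permute_list_reindex[OF \<tau>p, of "\<lambda>z. if z ! i = b then f (y @ z) else 0"] by simp
    also have "\<dots> = (\<Sum>z\<in>strings m. if z ! 0 = b then f (y @ z) else 0)"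
    proof (intro sum.cong refl)
      fix z :: "'a list" assume "z \<in> strings m"
      then have lz: "length z = m" by simp
      have "permute_list \<tau> z ! i = z ! 0"
        using lz i \<tau>p by (simp add: permute_list_nth \<tau>_def)
      moreover have "f (y @ permute_list \<tau> z) = f (y @ z)"
      proof -
        have "y @ permute_list \<tau> z = permute_list (Transposition.transpose j (j + i)) (y @ z)"
          unfolding \<tau>_def using permute_list_transpose_append[OF y, of i z] lz i by simp
        moreover have "Transposition.transpose j (j + i) permutes {..<n}"
          using i jn by (intro permutes_swap_id) (auto simp: m_def)
        moreover have "length (y @ z) = n" using y lz jn by (simp add: m_def)
        ultimately show ?thesis using sym by (simp add: sym_on_def)
      qed
      ultimately show "(if permute_list \<tau> z ! i = b then f (y @ permute_list \<tau> z) else 0)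
          = (if z ! 0 = b then f (y @ z) else 0)" by simp
    qed
    finally show "(\<Sum>z\<in>strings m. if z ! i = b then f (y @ z) else 0)
        = (\<Sum>z\<in>strings m. if z ! 0 = b then f (y @ z) else 0)" .
  qed
  also have "\<dots> = real m * (\<Sum>z\<in>strings m. if z ! 0 = b then f (y @ z) else 0)"
    by simp
  also have "(\<Sum>z\<in>strings m. if z ! 0 = b then f (y @ z) else 0) = (\<Sum>z\<in>strings (m - 1). f (y @ b # z))"
  proof -
    have "(\<Sum>z\<in>strings m. if z ! 0 = b then f (y @ z) else 0)
       = (\<Sum>c\<in>UNIV. \<Sum>z\<in>strings (m - 1). if c = b then f (y @ c # z) else 0)"
      by (subst m0, subst sum_strings_Suc_cons) simp
    also have "\<dots> = (\<Sum>c\<in>UNIV. if c = b then (\<Sum>z\<in>strings (m - 1). f (y @ c # z)) else 0)"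
      by (rule sum.cong[OF refl]) auto
    also have "\<dots> = (\<Sum>z\<in>strings (m - 1). f (y @ b # z))" by simp
    finally show ?thesis .
  qed
  finally show ?thesis by (simp add: m_def)
qed


lemma G_lower:
  fixes f :: "'a::finite list \<Rightarrow> real" and s :: "'a \<Rightarrow> real"
  assumes sym: "sym_on n f" and fnn: "\<And>x. 0 \<le> f x" and kn: "k \<le> n"
    and s0: "\<And>b. 0 \<le> s b" and c0: "0 \<le> c"
    and H: "\<And>x b. length x = n \<Longrightarrow> f x \<noteq> 0 \<Longrightarrow> s b > 0 \<Longrightarrow> real k + real n * (s b * c) \<le> real (count_list x b)"
  shows "length y \<le> k \<Longrightarrow> (\<Sum>x\<in>strings n. f x) * prod_list (map (\<lambda>b. s b * c) y) \<le> (\<Sum>z\<in>strings (n - length y). f (y @ z))"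
proof (induction y rule: rev_induct)
  case Nil
  then show ?case by simp
next
  case (snoc b y)
  define j where "j = length y"
  have jk: "j + 1 \<le> k" using snoc.prems by (simp add: j_def)
  have jn: "j < n" using jk kn by simp
  define G where "G = (\<Sum>z\<in>strings (n - j). f (y @ z))"
  define G' where "G' = (\<Sum>z\<in>strings (n - j - 1). f (y @ b # z))"
  have IH: "(\<Sum>x\<in>strings n. f x) * prod_list (map (\<lambda>b. s b * c) y) \<le> G"
    using snoc.IH jk by (simp add: G_def j_def)
  have G'eq: "(\<Sum>z\<in>strings (n - length (y @ [b])). f ((y @ [b]) @ z)) = G'"
    by (simp add: G'_def j_def)
  have G'nn: "0 \<le> G'" unfolding G'_def by (intro sum_nonneg fnn)
  have Gnn: "0 \<le> G" unfolding G_def by (intro sum_nonneg fnn)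
  have mu0: "0 \<le> (\<Sum>x\<in>strings n. f x)" by (intro sum_nonneg fnn)
  have sc: "(\<Sum>z\<in>strings (n - j). f (y @ z) * real (count_list z b)) = real (n - j) * G'"
    unfolding G'_def by (rule sym_count[OF sym j_def[symmetric] jn])
  show ?case
  proof (cases "s b > 0")
    case True
    have pw: "f (y @ z) * (real (n - j) * (s b * c)) \<le> f (y @ z) * real (count_list z b)"
      if z: "z \<in> strings (n - j)" for z
    proof (cases "f (y @ z) = 0")
      case True then show ?thesis by simp
    next
      case False
      have lz: "length (y @ z) = n" using z jn by (simp add: j_def)
      have "real k + real n * (s b * c) \<le> real (count_list (y @ z) b)"
        using H[OF lz False True] .
      moreover have "count_list y b \<le> j" unfolding j_def by (rule count_le_length)
      moreover have "real (n - j) * (s b * c) \<le> real n * (s b * c)"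
        using s0[of b] c0 jn by (intro mult_right_mono) auto
      ultimately have "real (n - j) * (s b * c) \<le> real (count_list z b)"
        using jk by simp
      then show ?thesis using fnn[of "y @ z"] by (intro mult_left_mono) auto
    qed
    have "real (n - j) * (s b * c * G) = (\<Sum>z\<in>strings (n - j). f (y @ z) * (real (n - j) * (s b * c)))"
      unfolding G_def by (simp add: sum_distrib_left sum_distrib_right mult_ac)
    also have "\<dots> \<le> real (n - j) * G'"
      unfolding sc[symmetric] by (intro sum_mono pw)
    finally have "s b * c * G \<le> G'" using jn by (simp add: mult_le_cancel_left_pos)
    moreover have "(\<Sum>x\<in>strings n. f x) * prod_list (map (\<lambda>b. s b * c) (y @ [b])) \<le> s b * c * G"
    proof -
      have "(\<Sum>x\<in>strings n. f x) * prod_list (map (\<lambda>b. s b * c) (y @ [b]))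
          = s b * c * ((\<Sum>x\<in>strings n. f x) * prod_list (map (\<lambda>b. s b * c) y))" by simp
      also have "\<dots> \<le> s b * c * G" using IH s0[of b] c0 by (intro mult_left_mono) auto
      finally show ?thesis .
    qed
    ultimately show ?thesis unfolding G'eq by linarith
  next
    case False
    then have "s b = 0" using s0[of b] by (simp add: order_le_less)
    then show ?thesis unfolding G'eq using G'nn by simp
  qed
qed


lemma KL_le_ratio:
  fixes r Q :: "'b \<Rightarrow> real"
  assumes fin: "finite S" and r0: "\<And>x. x \<in> S \<Longrightarrow> 0 \<le> r x" and r1: "(\<Sum>x\<in>S. r x) = 1"
    and C: "C > 0" and le: "\<And>x. x \<in> S \<Longrightarrow> C * r x \<le> Q x"
  shows "KL S r Q \<le> ereal (- ln C)"
proof -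
  have cond: "\<forall>x\<in>S. Q x = 0 \<longrightarrow> r x = 0"
  proof (intro ballI impI)
    fix x assume x: "x \<in> S" and "Q x = 0"
    then have "C * r x \<le> 0" using le[OF x] by simp
    then show "r x = 0" using r0[OF x] C by (simp add: mult_le_0_iff order_antisym)
  qed
  have pw: "(if r x = 0 then 0 else r x * ln (r x / Q x)) \<le> r x * (- ln C)" if x: "x \<in> S" for x
  proof (cases "r x = 0")
    case True then show ?thesis by simp
  next
    case False
    then have rp: "r x > 0" using r0[OF x] by simp
    have Qp: "Q x > 0" using le[OF x] C rp by (smt (verit) mult_pos_pos)
    have "r x / Q x \<le> 1 / C"
      using le[OF x] C Qp rp by (simp add: divide_simps mult.commute)
    then have "ln (r x / Q x) \<le> ln (1 / C)" using rp Qp by (intro ln_mono) auto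
    then have "ln (r x / Q x) \<le> - ln C" using C by (simp add: ln_div)
    then have "r x * ln (r x / Q x) \<le> r x * (- ln C)" using rp by (intro mult_left_mono) auto
    then show ?thesis using False by simp
  qed
  have "(\<Sum>x\<in>S. if r x = 0 then 0 else r x * ln (r x / Q x)) \<le> (\<Sum>x\<in>S. r x * (- ln C))"
    by (intro sum_mono pw)
  also have "\<dots> = (\<Sum>x\<in>S. r x) * (- ln C)" by (rule sum_distrib_right[symmetric])
  also have "\<dots> = - ln C" using r1 by simp
  finally show ?thesis using cond by (simp add: KL_def)
qed

lemma stein_unif:
  fixes F :: "nat \<Rightarrow> ('a::finite list \<Rightarrow> real) set"
  assumes stein: "\<And>p. is_pdist p \<Longrightarrow> iid 1 p \<notin> F 1
        \<Longrightarrow> \<exists>L. (D_reg F p \<longlonglongrightarrow> L) \<and> L > 0"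
    and s: "is_pdist s" "iid 1 s \<notin> F 1"
  shows "\<exists>ll>0. \<forall>\<^sub>F k in sequentially. \<forall>q'\<in>F k. ereal (real k * ll) < KL (strings k) (iid k s) q'"
proof -
  obtain L where L: "D_reg F s \<longlonglongrightarrow> L" "L > 0" using stein[OF s] by blast
  obtain ll where l: "0 < ereal ll" "ereal ll < L" using ereal_dense2[OF L(2)] by blast
  have ev: "\<forall>\<^sub>F k in sequentially. ereal ll < D_reg F s k"
    using order_tendstoD(1)[OF L(1) l(2)] .
  have "\<forall>\<^sub>F k in sequentially. \<forall>q'\<in>F k. ereal (real k * ll) < KL (strings k) (iid k s) q'"
    using ev eventually_ge_at_top[of 1]
  proof eventually_elim
    case (elim k)
    define I where "I = (INF q\<in>F k. KL (strings k) (iid k s) q)"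
    have kp: "real k > 0" using elim(2) by simp
    have D: "ereal ll < I / ereal (real k)" using elim(1) by (simp add: D_reg_def I_def)
    have "ereal (real k * ll) < I"
    proof (cases I)
      case (real r)
      then have "ll < r / real k" using D kp by simp
      then have "real k * ll < r" using kp by (simp add: field_simps)
      then show ?thesis using real by simp
    next
      case PInf then show ?thesis by simp
    next
      case MInf then show ?thesis using D kp by simp
    qed
    then show ?case
      using INF_lower[of _ "F k" "\<lambda>q. KL (strings k) (iid k s) q"] unfolding I_def
      by (meson order_less_le_trans)
  qed
  then show ?thesis using l(1) by auto
qed

lemma ev_real_ge: "\<forall>\<^sub>F k in sequentially. X \<le> real k"
proof -
  obtain N :: nat where "X \<le> real N" using real_arch_simple by blast
  have "\<forall>\<^sub>F k in sequentially. N \<le> k" by (rule eventually_ge_at_top)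
  then show ?thesis
  proof (rule eventually_mono)
    fix k assume "N \<le> k"
    then show "X \<le> real k" using \<open>X \<le> real N\<close> by linarith
  qed
qed

lemma prod_list_map_const_mult:
  "prod_list (map (\<lambda>b. s b * (c::real)) y) = prod_list (map s y) * c ^ length y"
  by (induction y) auto


lemma core:
  fixes F :: "nat \<Rightarrow> ('a::finite list \<Rightarrow> real) set" and K :: "('a \<Rightarrow> real) set"
  assumes dist: "\<And>n q. n \<ge> 1 \<Longrightarrow> q \<in> F n \<Longrightarrow> is_dist n q"
    and convex: "\<And>n q r t. n \<ge> 1 \<Longrightarrow> q \<in> F n \<Longrightarrow> r \<in> F n \<Longrightarrow> 0 \<le> t \<Longrightarrow> t \<le> 1
        \<Longrightarrow> (\<lambda>xs. t * q xs + (1 - t) * r xs) \<in> F n"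
    and marg: "\<And>n q. n \<ge> 1 \<Longrightarrow> q \<in> F (n + 1) \<Longrightarrow> marginal n q \<in> F n"
    and perm: "\<And>n q \<sigma>. n \<ge> 1 \<Longrightarrow> q \<in> F n \<Longrightarrow> \<sigma> permutes {0..<n}
        \<Longrightarrow> (\<lambda>xs. q (permute_coords \<sigma> xs)) \<in> F n"
    and stein: "\<And>p. is_pdist p \<Longrightarrow> iid 1 p \<notin> F 1
        \<Longrightarrow> \<exists>L. (D_reg F p \<longlonglongrightarrow> L) \<and> L > 0"
    and K: "compact K" and Kp: "\<And>t. t \<in> K \<Longrightarrow> is_pdist t \<and> iid 1 t \<notin> F 1"
    and eps: "\<epsilon> > 0"
  shows "\<exists>N. \<forall>n\<ge>N. \<forall>q\<in>F n. (\<Sum>x\<in>strings n. if ctype n x \<in> K then q x else 0) \<le> \<epsilon>"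
proof -
  have "\<forall>s\<in>K. \<exists>ll>0. \<forall>\<^sub>F k in sequentially. \<forall>q'\<in>F k. ereal (real k * ll) < KL (strings k) (iid k s) q'"
    using stein_unif[OF stein] Kp by blast
  then obtain ll where llb: "\<forall>s\<in>K. ll s > 0 \<and> (\<forall>\<^sub>F k in sequentially. \<forall>q'\<in>F k. ereal (real k * ll s) < KL (strings k) (iid k s) q')"
    using bchoice[of K "\<lambda>s ll. ll > 0 \<and> (\<forall>\<^sub>F k in sequentially. \<forall>q'\<in>F k. ereal (real k * ll) < KL (strings k) (iid k s) q')"]
    by blast
  then have ll: "\<And>s. s \<in> K \<Longrightarrow> ll s > 0"
     "\<And>s. s \<in> K \<Longrightarrow> \<forall>\<^sub>F k in sequentially. \<forall>q'\<in>F k. ereal (real k * ll s) < KL (strings k) (iid k s) q'"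
    by auto
  define eta where "eta s = ll s / 8" for s
  define U where "U s = {t::'a\<Rightarrow>real. \<forall>b. s b > 0 \<longrightarrow> s b * exp (- eta s) < t b}" for s
  have Uopen: "open (U s)" for s
  proof -
    have "U s = {t. \<forall>b\<in>{b. s b > 0}. t (id b) \<in> {s b * exp (- eta s)<..}}" by (auto simp: U_def)
    moreover have "open {t::'a\<Rightarrow>real. \<forall>b\<in>{b. s b > 0}. t (id b) \<in> {s b * exp (- eta s)<..}}"
      by (rule product_topology_basis') auto
    ultimately show ?thesis by simp
  qed
  have sU: "s \<in> U s" if "s \<in> K" for s
  proof -
    have "exp (- eta s) < 1" using ll(1)[OF that] by (simp add: eta_def)
    then show ?thesis by (auto simp: U_def)
  qed
  have "K \<subseteq> (\<Union>s\<in>K. U s)" using sU by auto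
  then obtain S where S: "S \<subseteq> K" "finite S" "K \<subseteq> (\<Union>s\<in>S. U s)"
    using compactE_image[OF K, of K U] Uopen by metis
  define cS where "cS = real (card S)"
  have evk: "\<forall>\<^sub>F k in sequentially. 1 \<le> k \<and> (\<forall>s\<in>S. \<forall>q'\<in>F k. ereal (real k * ll s) < KL (strings k) (iid k s) q')
       \<and> (\<forall>s\<in>S. ln (cS / \<epsilon>) \<le> real k * ll s * (3/4))"
  proof -
    have e1: "\<forall>\<^sub>F k in sequentially. 1 \<le> k" by (rule eventually_ge_at_top)
    have e2: "\<forall>\<^sub>F k in sequentially. \<forall>s\<in>S. \<forall>q'\<in>F k. ereal (real k * ll s) < KL (strings k) (iid k s) q'"
      using S(1,2) ll(2) by (intro eventually_ball_finite) auto
    have e3: "\<forall>\<^sub>F k in sequentially. \<forall>s\<in>S. ln (cS / \<epsilon>) \<le> real k * ll s * (3/4)"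
    proof (intro eventually_ball_finite[OF S(2)] ballI)
      fix s assume "s \<in> S"
      then have lp: "ll s > 0" using ll(1) S(1) by auto
      show "\<forall>\<^sub>F k in sequentially. ln (cS / \<epsilon>) \<le> real k * ll s * (3/4)"
        using ev_real_ge[of "ln (cS / \<epsilon>) / (ll s * (3/4))"]
      proof (rule eventually_mono)
        fix k assume "ln (cS / \<epsilon>) / (ll s * (3/4)) \<le> real k"
        then have "ln (cS / \<epsilon>) \<le> real k * (ll s * (3/4))" using lp by (simp add: pos_divide_le_eq)
        then show "ln (cS / \<epsilon>) \<le> real k * ll s * (3/4)" by (simp add: mult.assoc)
      qed
    qed
    show ?thesis using e1 e2 e3 by eventually_elim auto
  qed
  then obtain Nk where "\<forall>k\<ge>Nk. 1 \<le> k \<and> (\<forall>s\<in>S. \<forall>q'\<in>F k. ereal (real k * ll s) < KL (strings k) (iid k s) q')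
       \<and> (\<forall>s\<in>S. ln (cS / \<epsilon>) \<le> real k * ll s * (3/4))"
    by (auto simp: eventually_sequentially)
  then obtain k where k1: "1 \<le> k"
    and kKL: "\<And>s q'. s \<in> S \<Longrightarrow> q' \<in> F k \<Longrightarrow> ereal (real k * ll s) < KL (strings k) (iid k s) q'"
    and kln: "\<And>s. s \<in> S \<Longrightarrow> ln (cS / \<epsilon>) \<le> real k * ll s * (3/4)"
    by blast
  have evn: "\<forall>\<^sub>F n in sequentially. k \<le> n \<and>
      (\<forall>s\<in>S. \<forall>b\<in>UNIV. s b > 0 \<longrightarrow> real k \<le> real n * (s b * (exp (- eta s) - exp (- (2 * eta s)))))"
  proof -
    have e1: "\<forall>\<^sub>F n in sequentially. k \<le> n" by (rule eventually_ge_at_top)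
    have finU: "finite (UNIV :: 'a set)" by simp
    have e2: "\<forall>\<^sub>F n in sequentially. \<forall>s\<in>S. \<forall>b\<in>UNIV. s b > 0 \<longrightarrow> real k \<le> real n * (s b * (exp (- eta s) - exp (- (2 * eta s))))"
    proof (intro eventually_ball_finite[OF S(2)] ballI eventually_ball_finite[OF finU])
      fix s and b :: 'a assume "s \<in> S"
      then have lp: "eta s > 0" using ll(1) S(1) by (auto simp: eta_def)
      show "\<forall>\<^sub>F n in sequentially. s b > 0 \<longrightarrow> real k \<le> real n * (s b * (exp (- eta s) - exp (- (2 * eta s))))"
      proof (cases "s b > 0")
        case True
        define d where "d = s b * (exp (- eta s) - exp (- (2 * eta s)))"
        have "exp (- (2 * eta s)) < exp (- eta s)" using lp by simp
        then have dp: "d > 0" using True by (simp add: d_def)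
        show ?thesis using ev_real_ge[of "real k / d"]
        proof (rule eventually_mono)
          fix n assume "real k / d \<le> real n"
          then have "real k \<le> real n * d" using dp by (simp add: pos_divide_le_eq)
          then show "s b > 0 \<longrightarrow> real k \<le> real n * (s b * (exp (- eta s) - exp (- (2 * eta s))))"
            by (simp add: d_def)
        qed
      qed simp
    qed
    show ?thesis using e1 e2 by eventually_elim auto
  qed
  then obtain N where N: "\<And>n. n \<ge> N \<Longrightarrow> k \<le> n \<and>
      (\<forall>s\<in>S. \<forall>b\<in>UNIV. s b > 0 \<longrightarrow> real k \<le> real n * (s b * (exp (- eta s) - exp (- (2 * eta s)))))"
    by (auto simp: eventually_sequentially)
  show ?thesis
  proof (intro exI allI impI ballI)
    fix n and q :: "'a list \<Rightarrow> real" assume nN: "N \<le> n" and q: "q \<in> F n"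
    have kn: "k \<le> n" using N[OF nN] by simp
    have n1: "1 \<le> n" using kn k1 by simp
    have nk: "\<And>s b. s \<in> S \<Longrightarrow> s b > 0 \<Longrightarrow> real k \<le> real n * (s b * (exp (- eta s) - exp (- (2 * eta s))))"
      using N[OF nN] by blast
    have q0: "\<And>x. 0 \<le> q x" using dist[OF n1 q] by (simp add: is_dist_def)
    define mu where "mu s = (\<Sum>x::'a list\<in>strings n. if ctype n x \<in> U s then q x else 0)" for s
    show "(\<Sum>x::'a list\<in>strings n. if ctype n x \<in> K then q x else 0) \<le> \<epsilon>"
    proof (rule ccontr)
      assume gt: "\<not> (\<Sum>x\<in>strings n. if ctype n x \<in> K then q x else 0) \<le> \<epsilon>"
      have "(\<Sum>x\<in>strings n. if ctype n x \<in> K then q x else 0)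
          \<le> (\<Sum>x\<in>strings n. \<Sum>s\<in>S. if ctype n x \<in> U s then q x else 0)"
      proof (rule sum_mono)
        fix x :: "'a list" assume "x \<in> strings n"
        show "(if ctype n x \<in> K then q x else 0) \<le> (\<Sum>s\<in>S. if ctype n x \<in> U s then q x else 0)"
        proof (cases "ctype n x \<in> K")
          case True
          then obtain s where s: "s \<in> S" "ctype n x \<in> U s" using S(3) by blast
          have "(if ctype n x \<in> U s then q x else 0) \<le> (\<Sum>s\<in>S. if ctype n x \<in> U s then q x else 0)"
            using s(1) S(2) q0 by (intro member_le_sum) auto
          then show ?thesis using True s(2) by simp
        next
          case False
          then show ?thesis using q0 by (simp add: sum_nonneg)
        qed
      qed
      also have "\<dots> = (\<Sum>s\<in>S. mu s)" unfolding mu_def by (rule sum.swap)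
      finally have sumS: "\<epsilon> < (\<Sum>s\<in>S. mu s)" using gt by simp
      obtain s where sS: "s \<in> S" and mus: "\<epsilon> / cS < mu s"
      proof (rule ccontr)
        assume "\<not> thesis"
        then have "\<forall>s\<in>S. mu s \<le> \<epsilon> / cS" using that by force
        then have "(\<Sum>s\<in>S. mu s) \<le> of_nat (card S) * (\<epsilon> / cS)" by (intro sum_bounded_above) auto
        also have "\<dots> \<le> \<epsilon>" using eps by (cases "card S = 0") (auto simp: cS_def)
        finally show False using sumS by simp
      qed
      have cSp: "cS > 0" using sS S(2) by (auto simp: cS_def card_gt_0_iff)
      have sK: "s \<in> K" using sS S(1) by auto
      have "0 < \<epsilon> / cS" using eps cSp by simp
      then have mp: "mu s > 0" using mus by linarith
      have sp: "is_pdist s" using Kp[OF sK] by simp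
      have s0: "\<And>b. 0 \<le> s b" using sp by (simp add: is_pdist_def)
      have etap: "eta s > 0" using ll(1)[OF sK] by (simp add: eta_def)
      obtain qs where qsF: "qs \<in> F n" and qsym: "sym_on n qs"
        and qsum: "\<And>h. sym_on n h \<Longrightarrow> (\<Sum>x\<in>strings n. h x * qs x) = (\<Sum>x\<in>strings n. h x * q x)"
        using symmetrize[where F=F, OF convex perm n1 q] by blast
      have qs0: "\<And>x. 0 \<le> qs x" using dist[OF n1 qsF] by (simp add: is_dist_def)
      define h where "h x = (if ctype n x \<in> U s then 1 else (0::real))" for x
      define f where "f x = h x * qs x" for x
      have hsym: "sym_on n h"
        unfolding sym_on_def h_def using ctype_permute_list by fastforce
      have fsym: "sym_on n f"
        using hsym qsym unfolding sym_on_def f_def by simp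
      have f0: "\<And>x. 0 \<le> f x" unfolding f_def h_def using qs0 by simp
      have "(\<Sum>x\<in>strings n. f x) = (\<Sum>x\<in>strings n. h x * qs x)" by (simp add: f_def)
      also have "\<dots> = (\<Sum>x\<in>strings n. h x * q x)" by (rule qsum[OF hsym])
      also have "\<dots> = mu s" unfolding mu_def h_def by (intro sum.cong refl) simp
      finally have sumf: "(\<Sum>x\<in>strings n. f x) = mu s" .
      define c where "c = exp (- (2 * eta s))"
      have cp: "c > 0" by (simp add: c_def)
      have H: "real k + real n * (s b * c) \<le> real (count_list x b)"
        if x: "length x = n" and fx: "f x \<noteq> 0" and sb: "s b > 0" for x b
      proof -
        have "ctype n x \<in> U s" using fx by (auto simp: f_def h_def split: if_splits)
        then have "s b * exp (- eta s) < real (count_list x b) / real n"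
          using sb by (auto simp: U_def ctype_def)
        then have "real n * (s b * exp (- eta s)) < real (count_list x b)"
          using n1 by (simp add: less_divide_eq mult.commute)
        moreover have "real k \<le> real n * (s b * (exp (- eta s) - c))"
          using nk[OF sS sb] by (simp add: c_def)
        ultimately show ?thesis by (simp add: algebra_simps)
      qed
      define M where "M y = (if length y = k then \<Sum>z\<in>strings (n - k). qs (y @ z) else 0)" for y
      have MF: "M \<in> F k" unfolding M_def using marg_iter[OF dist marg qsF k1 kn] .
      have Mlow: "mu s * c ^ k * iid k s y \<le> M y" if y: "y \<in> strings k" for y
      proof -
        have ly: "length y = k" using y by simp
        have "mu s * prod_list (map (\<lambda>b. s b * c) y) \<le> (\<Sum>z\<in>strings (n - length y). f (y @ z))"
          using G_lower[OF fsym f0 kn s0 _ H, of y] cp ly sumf by simp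
        also have "\<dots> \<le> (\<Sum>z\<in>strings (n - k). qs (y @ z))"
          using qs0 unfolding ly by (intro sum_mono) (simp add: f_def h_def)
        also have "\<dots> = M y" using ly by (simp add: M_def)
        finally have A: "mu s * prod_list (map (\<lambda>b. s b * c) y) \<le> M y" .
        have B: "prod_list (map (\<lambda>b. s b * c) y) = iid k s y * c ^ k"
          using prod_list_map_const_mult[of s c y] ly by (simp add: iid_eq)
        have "mu s * c ^ k * iid k s y = mu s * prod_list (map (\<lambda>b. s b * c) y)"
          unfolding B by (simp only: mult_ac)
        then show ?thesis using A by (simp only:)
      qed
      have Cp: "mu s * c ^ k > 0"
        using mus cSp eps cp by (smt (verit) divide_pos_pos zero_less_power mult_pos_pos)
      have KLle: "KL (strings k) (iid k s) M \<le> ereal (- ln (mu s * c ^ k))"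
      proof (rule KL_le_ratio[OF strings_finite])
        show "\<And>x. x \<in> strings k \<Longrightarrow> 0 \<le> iid k s x" using iid_nonneg[OF sp] by blast
        show "(\<Sum>x\<in>strings k. iid k s x) = 1" by (rule sum_iid[OF sp])
        show "0 < mu s * c ^ k" by (rule Cp)
        show "\<And>x. x \<in> strings k \<Longrightarrow> mu s * c ^ k * iid k s x \<le> M x" by (rule Mlow)
      qed
      have "- ln (mu s * c ^ k) = - ln (mu s) + 2 * eta s * real k"
      proof -
        have "ln (mu s * c ^ k) = ln (mu s) + ln (c ^ k)" using mp cp by (intro ln_mult_pos) auto
        also have "ln (c ^ k) = real k * ln c" using cp by (simp add: ln_realpow)
        also have "ln c = - (2 * eta s)" by (simp add: c_def)
        finally show ?thesis by simp
      qed
      also have "- ln (mu s) < ln (cS / \<epsilon>)"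
      proof -
        have "ln (\<epsilon> / cS) < ln (mu s)" using mus eps cSp mp by (intro ln_less_cancel_iff[THEN iffD2]) auto
        moreover have "ln (cS / \<epsilon>) = - ln (\<epsilon> / cS)" using eps cSp by (simp add: ln_div)
        ultimately show ?thesis by simp
      qed
      finally have "- ln (mu s * c ^ k) < ln (cS / \<epsilon>) + 2 * eta s * real k" by simp
      also have "\<dots> \<le> real k * ll s"
      proof -
        have "2 * eta s * real k = (real k * ll s) / 4" by (simp add: eta_def)
        moreover have "real k * ll s * (3/4) = (real k * ll s) * 3 / 4" by simp
        ultimately show ?thesis using kln[OF sS] by linarith
      qed
      finally have a: "- ln (mu s * c ^ k) < real k * ll s" .
      have "KL (strings k) (iid k s) M < ereal (real k * ll s)"
      proof -
        have "ereal (- ln (mu s * c ^ k)) < ereal (real k * ll s)" using a by simp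
        then show ?thesis using KLle by (rule order.strict_trans1[rotated])
      qed
      then show False using kKL[OF sS MF] by simp
    qed
  qed
qed


lemma xlnx_isCont: "isCont (\<lambda>y::real. y * ln y) y0"
proof (cases "y0 = 0")
  case False
  then show ?thesis by (intro continuous_intros) auto
next
  case True
  have R: "((\<lambda>y::real. y * ln y) \<longlongrightarrow> 0) (at_right 0)" by real_asymp
  have "((\<lambda>y::real. (- y) * ln (- y)) \<longlongrightarrow> - 0) (at_right 0)"
    using tendsto_minus[OF R] by (simp add: ln_minus)
  then have L: "((\<lambda>y::real. y * ln y) \<longlongrightarrow> 0) (at_left 0)"
    by (simp add: filterlim_at_left_to_right)
  have "((\<lambda>y::real. y * ln y) \<longlongrightarrow> 0) (at 0)" using L R by (rule filterlim_split_at)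
  then show ?thesis using True by (simp add: isCont_def)
qed

lemma xlnx_cont_on: "continuous_on UNIV (\<lambda>y::real. y * ln y)"
  using xlnx_isCont by (simp add: continuous_on_eq_continuous_at)

lemma sum_count_list: "(\<Sum>b\<in>(UNIV::'a::finite set). count_list x b) = length x"
proof (induction x)
  case Nil then show ?case by simp
next
  case (Cons a x)
  have "(\<Sum>b\<in>(UNIV::'a set). count_list (a # x) b) = (\<Sum>b\<in>UNIV. (if b = a then 1 else 0) + count_list x b)"
    by (intro sum.cong) auto
  also have "\<dots> = 1 + length x" by (simp add: sum.distrib Cons)
  finally show ?case by simp
qed

lemma ctype_pdist:
  fixes x :: "'a::finite list"
  assumes "length x = n" "n \<ge> 1"
  shows "is_pdist (ctype n x)"
proof -
  have "(\<Sum>b\<in>UNIV. real (count_list x b) / real n) = real (\<Sum>b\<in>(UNIV::'a set). count_list x b) / real n"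
    by (simp add: sum_divide_distrib)
  also have "\<dots> = 1" using assms by (simp add: sum_count_list)
  finally show ?thesis by (simp add: is_pdist_def ctype_def)
qed

definition Kset :: "('a::finite \<Rightarrow> real) \<Rightarrow> real \<Rightarrow> ('a \<Rightarrow> real) set" where
  "Kset p c = {t. is_pdist t \<and> KL (strings 1) (iid 1 t) (iid 1 p) \<le> ereal c}"

lemma Kset_compact:
  fixes p :: "'a::finite \<Rightarrow> real"
  assumes p: "is_pdist p"
  shows "compact (Kset p c)"
proof -
  define P where "P = {b. p b \<noteq> 0}"
  define \<psi> where "\<psi> t = (\<Sum>b\<in>P. t b * ln (t b) - t b * ln (p b))" for t :: "'a \<Rightarrow> real"
  have p0: "\<And>b. 0 \<le> p b" using p by (simp add: is_pdist_def)
  have eq: "Kset p c = {t. \<forall>b. t b \<in> {0..1}} \<inter>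
      ({t. \<forall>b. 0 \<le> t b} \<inter> {t. (\<Sum>b\<in>UNIV. t b) = 1} \<inter> {t. \<forall>b. (if p b = 0 then t b else 0) = 0}
        \<inter> {t. \<psi> t \<le> c})"
  proof (intro set_eqI iffI)
    fix t assume "t \<in> Kset p c"
    then have tp: "is_pdist t" and kl: "KL (strings 1) (iid 1 t) (iid 1 p) \<le> ereal c"
      by (auto simp: Kset_def)
    have t0: "\<And>b. 0 \<le> t b" and t1: "(\<Sum>b\<in>UNIV. t b) = 1" using tp by (auto simp: is_pdist_def)
    have supp: "\<forall>b. p b = 0 \<longrightarrow> t b = 0" using kl unfolding KL1 by (auto split: if_splits)
    have KLv: "(\<Sum>b\<in>UNIV. if t b = 0 then 0 else t b * ln (t b / p b)) \<le> c"
      using kl supp unfolding KL1 by simp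
    have "(\<Sum>b\<in>UNIV. if t b = 0 then 0 else t b * ln (t b / p b)) = \<psi> t"
    proof -
      have "(\<Sum>b\<in>UNIV. if t b = 0 then 0 else t b * ln (t b / p b)) = (\<Sum>b\<in>P. if t b = 0 then 0 else t b * ln (t b / p b))"
        using supp by (intro sum.mono_neutral_right) (auto simp: P_def)
      also have "\<dots> = \<psi> t" unfolding \<psi>_def
      proof (intro sum.cong refl)
        fix b assume "b \<in> P"
        then have "p b > 0" using p0[of b] by (simp add: P_def)
        then show "(if t b = 0 then 0 else t b * ln (t b / p b)) = t b * ln (t b) - t b * ln (p b)"
          using t0[of b] by (auto simp: ln_div right_diff_distrib)
      qed
      finally show ?thesis .
    qed
    moreover have "\<And>b. t b \<le> 1"
    proof -
      fix b
      have "t b \<le> (\<Sum>b\<in>UNIV. t b)" using t0 by (intro member_le_sum) auto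
      then show "t b \<le> 1" using t1 by simp
    qed
    ultimately show "t \<in> {t. \<forall>b. t b \<in> {0..1}} \<inter>
      ({t. \<forall>b. 0 \<le> t b} \<inter> {t. (\<Sum>b\<in>UNIV. t b) = 1} \<inter> {t. \<forall>b. (if p b = 0 then t b else 0) = 0}
        \<inter> {t. \<psi> t \<le> c})"
      using t0 t1 supp KLv by auto
  next
    fix t assume "t \<in> {t. \<forall>b. t b \<in> {0..1}} \<inter>
      ({t. \<forall>b. 0 \<le> t b} \<inter> {t. (\<Sum>b\<in>UNIV. t b) = 1} \<inter> {t. \<forall>b. (if p b = 0 then t b else 0) = 0}
        \<inter> {t. \<psi> t \<le> c})"
    then have t0: "\<And>b. 0 \<le> t b" and t1: "(\<Sum>b\<in>UNIV. t b) = 1" and supp: "\<forall>b. p b = 0 \<longrightarrow> t b = 0"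
      and ps: "\<psi> t \<le> c"
      by (auto split: if_splits)
    have "(\<Sum>b\<in>UNIV. if t b = 0 then 0 else t b * ln (t b / p b)) = \<psi> t"
    proof -
      have "(\<Sum>b\<in>UNIV. if t b = 0 then 0 else t b * ln (t b / p b)) = (\<Sum>b\<in>P. if t b = 0 then 0 else t b * ln (t b / p b))"
        using supp by (intro sum.mono_neutral_right) (auto simp: P_def)
      also have "\<dots> = \<psi> t" unfolding \<psi>_def
      proof (intro sum.cong refl)
        fix b assume "b \<in> P"
        then have "p b > 0" using p0[of b] by (simp add: P_def)
        then show "(if t b = 0 then 0 else t b * ln (t b / p b)) = t b * ln (t b) - t b * ln (p b)"
          using t0[of b] by (auto simp: ln_div right_diff_distrib)
      qed
      finally show ?thesis .
    qed
    then show "t \<in> Kset p c" using t0 t1 supp ps unfolding Kset_def KL1 by (simp add: is_pdist_def)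
  qed
  have box: "compact {t::'a\<Rightarrow>real. \<forall>b. t b \<in> {0..1}}"
  proof -
    have "compactin (product_topology (\<lambda>_. euclideanreal) UNIV) (PiE UNIV (\<lambda>_::'a. {0..1::real}))"
      by (simp add: compactin_PiE)
    moreover have "PiE UNIV (\<lambda>_::'a. {0..1::real}) = {t. \<forall>b. t b \<in> {0..1}}"
      by (auto simp: PiE_def Pi_def)
    ultimately show ?thesis by (simp add: euclidean_product_topology compactin_euclidean_iff)
  qed
  have ev: "continuous_on UNIV (\<lambda>t::'a\<Rightarrow>real. t b)" for b by simp
  have c1: "closed {t::'a\<Rightarrow>real. \<forall>b. 0 \<le> t b}"
    by (intro closed_Collect_all closed_Collect_le continuous_on_const ev)
  have c2: "closed {t::'a\<Rightarrow>real. (\<Sum>b\<in>UNIV. t b) = 1}"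
    by (intro closed_Collect_eq continuous_on_sum continuous_on_const ev)
  have c3: "closed {t::'a\<Rightarrow>real. \<forall>b. (if p b = 0 then t b else 0) = 0}"
  proof (intro closed_Collect_all closed_Collect_eq continuous_on_const)
    fix b show "continuous_on UNIV (\<lambda>t::'a\<Rightarrow>real. if p b = 0 then t b else 0)"
      by (cases "p b = 0") (simp_all add: ev)
  qed
  have c4: "closed {t::'a\<Rightarrow>real. \<psi> t \<le> c}"
  proof (intro closed_Collect_le continuous_on_const)
    have xl: "continuous_on UNIV (\<lambda>t::'a\<Rightarrow>real. t b * ln (t b))" for b
      using continuous_on_compose[OF ev xlnx_cont_on[THEN continuous_on_subset]] by (simp add: o_def)
    have yl: "continuous_on UNIV (\<lambda>t::'a\<Rightarrow>real. t b * ln (p b))" for b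
      by (intro continuous_on_mult ev continuous_on_const)
    show "continuous_on UNIV \<psi>" unfolding \<psi>_def
      by (rule continuous_on_sum) (rule continuous_on_diff[OF xl yl])
  qed
  show ?thesis unfolding eq
    by (intro compact_Int_closed box closed_Int c1 c2 c3 c4)
qed


lemma pw_type:
  fixes p :: "'a::finite \<Rightarrow> real" and x :: "'a list"
  assumes p: "is_pdist p" and lx: "length x = n" and n1: "n \<ge> 1" and nK: "ctype n x \<notin> Kset p c"
  shows "iid n p x \<le> exp (- (real n * c)) * iid n (ctype n x) x"
proof -
  define t where "t = ctype n x"
  have tp: "is_pdist t" unfolding t_def by (rule ctype_pdist[OF lx n1])
  have t0: "\<And>b. 0 \<le> t b" using tp by (simp add: is_pdist_def)
  have p0: "\<And>b. 0 \<le> p b" using p by (simp add: is_pdist_def)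
  have np: "real n > 0" using n1 by simp
  have tb: "t b = real (count_list x b) / real n" for b by (simp add: t_def ctype_def)
  have ip: "iid n p x = (\<Prod>b\<in>UNIV. p b ^ count_list x b)" by (simp add: iid_eq[OF lx] prod_list_count)
  have it: "iid n t x = (\<Prod>b\<in>UNIV. t b ^ count_list x b)" by (simp add: iid_eq[OF lx] prod_list_count)
  have itnn: "0 \<le> iid n t x" by (rule iid_nonneg[OF tp])
  show ?thesis
  proof (cases "\<forall>b. p b = 0 \<longrightarrow> t b = 0")
    case False
    then obtain b where b: "p b = 0" "t b \<noteq> 0" by blast
    then have "count_list x b \<noteq> 0" by (auto simp: tb)
    then have "p b ^ count_list x b = 0" using b by simp
    then have "iid n p x = 0" unfolding ip by (intro prod_zero) auto
    then show ?thesis using itnn unfolding t_def by simp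
  next
    case supp: True
    define L where "L b = (if t b = 0 then 0 else ln (t b / p b))" for b
    define D where "D = (\<Sum>b\<in>UNIV. if t b = 0 then 0 else t b * ln (t b / p b))"
    have "\<not> ereal D \<le> ereal c" using nK tp supp unfolding Kset_def t_def[symmetric] KL1 D_def by simp
    then have Dc: "c < D" by simp
    have pb: "p b ^ count_list x b = t b ^ count_list x b * exp (- (real (count_list x b) * L b))" for b
    proof (cases "count_list x b = 0")
      case True then show ?thesis by simp
    next
      case False
      then have tpos: "t b > 0" using np by (simp add: tb)
      then have ppos: "p b > 0" using supp p0[of b] by (metis order_le_less)
      have "exp (- (real (count_list x b) * L b)) = exp (- L b) ^ count_list x b"
        by (simp add: exp_of_nat_mult[symmetric])
      also have "exp (- L b) = p b / t b" using tpos ppos by (simp add: L_def exp_minus)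
      finally show ?thesis using tpos by (simp add: power_divide)
    qed
    have "iid n p x = iid n t x * exp (\<Sum>b\<in>UNIV. - (real (count_list x b) * L b))"
      unfolding ip it pb by (simp add: prod.distrib exp_sum)
    also have "(\<Sum>b\<in>UNIV. - (real (count_list x b) * L b)) = - (real n * D)"
    proof -
      have "(\<Sum>b\<in>UNIV. real (count_list x b) * L b) = (\<Sum>b\<in>UNIV. real n * (if t b = 0 then 0 else t b * ln (t b / p b)))"
        using np by (intro sum.cong refl) (simp add: L_def tb)
      then show ?thesis by (simp add: D_def sum_distrib_left sum_negf)
    qed
    also have "iid n t x * exp (- (real n * D)) \<le> iid n t x * exp (- (real n * c))"
      using Dc np itnn by (intro mult_left_mono) auto
    finally show ?thesis by (simp add: t_def mult.commute)
  qed
qed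

lemma type_bound:
  fixes p :: "'a::finite \<Rightarrow> real"
  assumes p: "is_pdist p" and n1: "n \<ge> 1"
  shows "(\<Sum>x\<in>strings n. (if ctype n x \<in> Kset p c then 0 else 1) * iid n p x)
      \<le> real (n + 1) ^ CARD('a) * exp (- (real n * c))"
proof -
  define g where "g x = (\<lambda>b. count_list x b)" for x :: "'a list"
  have "(\<Sum>x\<in>strings n. (if ctype n x \<in> Kset p c then 0 else 1) * iid n p x)
      \<le> (\<Sum>x::'a list\<in>strings n. exp (- (real n * c)) * iid n (ctype n x) x)"
  proof (rule sum_mono)
    fix x :: "'a list" assume "x \<in> strings n"
    then have lx: "length x = n" by simp
    show "(if ctype n x \<in> Kset p c then 0 else 1) * iid n p x \<le> exp (- (real n * c)) * iid n (ctype n x) x"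
      using pw_type[OF p lx n1, of c] iid_nonneg[OF ctype_pdist[OF lx n1]] by auto
  qed
  also have "\<dots> = exp (- (real n * c)) * (\<Sum>x::'a list\<in>strings n. iid n (ctype n x) x)"
    by (simp add: sum_distrib_left)
  also have "(\<Sum>x::'a list\<in>strings n. iid n (ctype n x) x) \<le> real (card (g ` strings n))"
  proof -
    have "(\<Sum>x::'a list\<in>strings n. iid n (ctype n x) x)
       = (\<Sum>v\<in>g ` strings n. \<Sum>x\<in>{x \<in> strings n. g x = v}. iid n (ctype n x) x)"
      by (rule sum.image_gen[OF strings_finite])
    also have "\<dots> \<le> (\<Sum>v\<in>g ` strings n. 1)"
    proof (rule sum_mono)
      fix v assume "v \<in> g ` strings n"
      then obtain x0 where x0: "x0 \<in> strings n" "v = g x0" by blast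
      have l0: "length x0 = n" using x0 by simp
      have "(\<Sum>x\<in>{x \<in> strings n. g x = v}. iid n (ctype n x) x) = (\<Sum>x\<in>{x \<in> strings n. g x = v}. iid n (ctype n x0) x)"
      proof (intro sum.cong refl)
        fix x assume "x \<in> {x \<in> strings n. g x = v}"
        then have "g x = g x0" using x0 by simp
        then have "ctype n x = ctype n x0" by (simp add: g_def ctype_def)
        then show "iid n (ctype n x) x = iid n (ctype n x0) x" by simp
      qed
      also have "\<dots> \<le> (\<Sum>x\<in>strings n. iid n (ctype n x0) x)"
        using iid_nonneg[OF ctype_pdist[OF l0 n1]] by (intro sum_mono2 strings_finite) auto
      also have "\<dots> = 1" by (rule sum_iid[OF ctype_pdist[OF l0 n1]])
      finally show "(\<Sum>x\<in>{x \<in> strings n. g x = v}. iid n (ctype n x) x) \<le> 1" .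
    qed
    also have "\<dots> = real (card (g ` strings n))" by simp
    finally show ?thesis .
  qed
  also have "card (g ` strings n) \<le> (n + 1) ^ CARD('a)"
  proof -
    have sub: "g ` strings n \<subseteq> PiE UNIV (\<lambda>_::'a. {..n})"
      by (auto simp: g_def PiE_def count_le_length)
    have "card (g ` strings n) \<le> card (PiE UNIV (\<lambda>_::'a. {..n}))"
      by (rule card_mono[OF _ sub]) (simp add: finite_PiE)
    also have "\<dots> = (n + 1) ^ CARD('a)" by (simp add: card_PiE)
    finally show ?thesis .
  qed
  then have "real (card (g ` strings n)) \<le> real ((n + 1) ^ CARD('a))" by (simp only: of_nat_le_iff)
  then have "real (card (g ` strings n)) \<le> real (n + 1) ^ CARD('a)" by (simp only: of_nat_power)
  then have "exp (- (real n * c)) * real (card (g ` strings n)) \<le> exp (- (real n * c)) * real (n + 1) ^ CARD('a)"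
    by (intro mult_left_mono) auto
  finally show ?thesis by (simp add: mult.commute)
qed


lemma lower_bound:
  fixes F :: "nat \<Rightarrow> ('a::finite list \<Rightarrow> real) set"
  assumes dist: "\<And>n q. n \<ge> 1 \<Longrightarrow> q \<in> F n \<Longrightarrow> is_dist n q"
    and convex: "\<And>n q r t. n \<ge> 1 \<Longrightarrow> q \<in> F n \<Longrightarrow> r \<in> F n \<Longrightarrow> 0 \<le> t \<Longrightarrow> t \<le> 1
        \<Longrightarrow> (\<lambda>xs. t * q xs + (1 - t) * r xs) \<in> F n"
    and marg: "\<And>n q. n \<ge> 1 \<Longrightarrow> q \<in> F (n + 1) \<Longrightarrow> marginal n q \<in> F n"
    and perm: "\<And>n q \<sigma>. n \<ge> 1 \<Longrightarrow> q \<in> F n \<Longrightarrow> \<sigma> permutes {0..<n}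
        \<Longrightarrow> (\<lambda>xs. q (permute_coords \<sigma> xs)) \<in> F n"
    and stein: "\<And>p. is_pdist p \<Longrightarrow> iid 1 p \<notin> F 1
        \<Longrightarrow> \<exists>L. (D_reg F p \<longlonglongrightarrow> L) \<and> L > 0"
    and p: "is_pdist p" and eps: "0 < \<epsilon>" and c: "ereal c < D_F F p"
  shows "\<forall>\<^sub>F n in sequentially. ereal c < DH_set n \<epsilon> (F n) (iid n p) / ereal (real n)"
proof -
  obtain c' where c': "ereal c < ereal c'" "ereal c' < D_F F p" using ereal_dense2[OF c] by blast
  define K where "K = Kset p c'"
  have Kc: "compact K" unfolding K_def by (rule Kset_compact[OF p])
  have Kp: "is_pdist t \<and> iid 1 t \<notin> F 1" if t: "t \<in> K" for t
  proof
    show tp: "is_pdist t" using t by (simp add: K_def Kset_def)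
    show "iid 1 t \<notin> F 1"
    proof
      assume "iid 1 t \<in> F 1"
      then have "D_F F p \<le> KL (strings 1) (iid 1 t) (iid 1 p)" unfolding D_F_def by (rule INF_lower)
      also have "\<dots> \<le> ereal c'" using t by (simp add: K_def Kset_def)
      finally show False using c'(2) by simp
    qed
  qed
  obtain N where N: "\<And>n q. n \<ge> N \<Longrightarrow> q \<in> F n \<Longrightarrow> (\<Sum>x\<in>strings n. if ctype n x \<in> K then q x else 0) \<le> \<epsilon>"
    using core[where F=F, OF dist convex marg perm stein Kc Kp eps] by blast
  define m where "m = CARD('a)"
  have lim: "((\<lambda>n. ln (real n + 1) / real n) \<longlongrightarrow> 0) sequentially" by real_asymp
  have "((\<lambda>n. real m * (ln (real n + 1) / real n)) \<longlongrightarrow> real m * 0) sequentially"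
    by (intro tendsto_mult tendsto_const lim)
  then have ev1: "\<forall>\<^sub>F n in sequentially. real m * (ln (real n + 1) / real n) < c' - c"
    using c'(1) by (intro order_tendstoD(2)) auto
  have ev2: "\<forall>\<^sub>F n in sequentially. max N 1 \<le> n" by (rule eventually_ge_at_top)
  show ?thesis using ev1 ev2
  proof eventually_elim
    case (elim n)
    have nN: "n \<ge> N" and n1: "n \<ge> 1" using elim(2) by auto
    have np: "real n > 0" using n1 by simp
    define B where "B = real (n + 1) ^ m * exp (- (real n * c'))"
    have Bp: "B > 0" by (simp add: B_def)
    have lnB: "- ln B = real n * c' - real m * ln (real n + 1)"
    proof -
      have "ln B = ln (real (n + 1) ^ m) + ln (exp (- (real n * c')))"
        unfolding B_def by (intro ln_mult_pos) auto
      also have "ln (real (n + 1) ^ m) = real m * ln (real n + 1)"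
        by (simp add: ln_realpow add.commute)
      finally show ?thesis by simp
    qed
    have DHq: "ereal (real n * c' - real m * ln (real n + 1)) \<le> DH n \<epsilon> q (iid n p)" if q: "q \<in> F n" for q
    proof -
      define a where "a x = (if ctype n x \<in> K then 0 else (1::real))" for x :: "'a list"
      let ?S = "{(\<Sum>xs\<in>strings n. a xs * iid n p xs) | a.
          (\<forall>xs. 0 \<le> a xs \<and> a xs \<le> 1) \<and> (\<Sum>xs\<in>strings n. (1 - a xs) * q xs) \<le> \<epsilon>}"
      have mem: "(\<Sum>xs\<in>strings n. a xs * iid n p xs) \<in> ?S"
      proof -
        have "(\<Sum>xs\<in>strings n. (1 - a xs) * q xs) = (\<Sum>x\<in>strings n. if ctype n x \<in> K then q x else 0)"
          by (intro sum.cong refl) (simp add: a_def)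
        also have "\<dots> \<le> \<epsilon>" by (rule N[OF nN q])
        finally show ?thesis by (auto simp: a_def)
      qed
      have bdd: "bdd_below ?S"
      proof (rule bdd_belowI)
        fix v assume "v \<in> ?S"
        then obtain a' where "v = (\<Sum>xs\<in>strings n. a' xs * iid n p xs)" "\<forall>xs. 0 \<le> a' xs \<and> a' xs \<le> 1" by blast
        then show "0 \<le> v" using iid_nonneg[OF p] by (auto intro!: sum_nonneg)
      qed
      have "hyp_min n \<epsilon> q (iid n p) \<le> (\<Sum>xs\<in>strings n. a xs * iid n p xs)"
        unfolding hyp_min_def by (rule cInf_lower[OF mem bdd])
      also have "\<dots> \<le> B"
        using type_bound[OF p n1, of c'] by (simp add: a_def K_def B_def m_def)
      finally have hB: "hyp_min n \<epsilon> q (iid n p) \<le> B" .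
      show ?thesis
      proof (cases "hyp_min n \<epsilon> q (iid n p) \<le> 0")
        case True then show ?thesis by (simp add: DH_def neg_log_def)
      next
        case False
        then have "ln (hyp_min n \<epsilon> q (iid n p)) \<le> ln B" using hB by (intro ln_mono) auto
        then show ?thesis using False lnB by (simp add: DH_def neg_log_def)
      qed
    qed
    have "ereal (real n * c' - real m * ln (real n + 1)) \<le> DH_set n \<epsilon> (F n) (iid n p)"
      unfolding DH_set_def using DHq by (rule INF_greatest)
    then have A: "ereal (real n * c' - real m * ln (real n + 1)) / ereal (real n) \<le> DH_set n \<epsilon> (F n) (iid n p) / ereal (real n)"
      using np by (intro ereal_divide_right_mono) auto
    have B: "ereal (real n * c' - real m * ln (real n + 1)) / ereal (real n) = ereal (c' - real m * (ln (real n + 1) / real n))"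
      using np by (simp add: field_simps)
    have C: "c < c' - real m * (ln (real n + 1) / real n)" using elim(1) by simp
    have "ereal c < ereal (c' - real m * (ln (real n + 1) / real n))" using C by simp
    also have "\<dots> = ereal (real n * c' - real m * ln (real n + 1)) / ereal (real n)" using B by simp
    also have "\<dots> \<le> DH_set n \<epsilon> (F n) (iid n p) / ereal (real n)" by (rule A)
    finally show ?case .
  qed
qed

theorem mainTheorem3:
  fixes F :: "nat \<Rightarrow> ('a::finite list \<Rightarrow> real) set"
  assumes dist: "\<And>n q. n \<ge> 1 \<Longrightarrow> q \<in> F n \<Longrightarrow> is_dist n q"
    and convex: "\<And>n q r t. n \<ge> 1 \<Longrightarrow> q \<in> F n \<Longrightarrow> r \<in> F n \<Longrightarrow> 0 \<le> t \<Longrightarrow> t \<le> 1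
        \<Longrightarrow> (\<lambda>xs. t * q xs + (1 - t) * r xs) \<in> F n"
    and closed: "\<And>n. n \<ge> 1 \<Longrightarrow> closed (F n)"
    and full_support: "\<exists>q\<in>F 1. \<forall>x. q [x] > 0"
    and marg: "\<And>n q. n \<ge> 1 \<Longrightarrow> q \<in> F (n + 1) \<Longrightarrow> marginal n q \<in> F n"
    and tens: "\<And>n m q q'. n \<ge> 1 \<Longrightarrow> m \<ge> 1 \<Longrightarrow> q \<in> F n \<Longrightarrow> q' \<in> F m
        \<Longrightarrow> tensor n m q q' \<in> F (n + m)"
    and perm: "\<And>n q \<sigma>. n \<ge> 1 \<Longrightarrow> q \<in> F n \<Longrightarrow> \<sigma> permutes {0..<n}
        \<Longrightarrow> (\<lambda>xs. q (permute_coords \<sigma> xs)) \<in> F n"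
    and stein: "\<And>p. is_pdist p \<Longrightarrow> iid 1 p \<notin> F 1
        \<Longrightarrow> \<exists>L. (D_reg F p \<longlonglongrightarrow> L) \<and> L > 0"
  shows "\<forall>p. is_pdist p \<longrightarrow>
           (\<forall>\<epsilon>. 0 < \<epsilon> \<and> \<epsilon> < 1 \<longrightarrow>
              ((\<lambda>n. DH_set n \<epsilon> (F n) (iid n p) / ereal (real n)) \<longlonglongrightarrow> D_F F p))
           \<and> ((\<lambda>\<epsilon>. liminf (\<lambda>n. DH_set n \<epsilon> (F n) (iid n p) / ereal (real n)))
                 \<longlongrightarrow> D_F F p) (at_right 0)"
proof (intro allI impI)
  fix p :: "'a \<Rightarrow> real" assume p: "is_pdist p"
  have lim: "((\<lambda>n. DH_set n \<epsilon> (F n) (iid n p) / ereal (real n)) \<longlonglongrightarrow> D_F F p)"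
    if e: "0 < \<epsilon>" "\<epsilon> < 1" for \<epsilon>
    unfolding order_tendsto_iff
  proof (intro conjI allI impI)
    fix l assume l: "l < D_F F p"
    obtain c where c: "l < ereal c" "ereal c < D_F F p" using ereal_dense2[OF l] by blast
    show "\<forall>\<^sub>F n in sequentially. l < DH_set n \<epsilon> (F n) (iid n p) / ereal (real n)"
    proof -
      have "\<forall>\<^sub>F n in sequentially. ereal c < DH_set n \<epsilon> (F n) (iid n p) / ereal (real n)"
        by (rule lower_bound[where F=F, OF dist convex marg perm stein p e(1) c(2)])
      then show ?thesis
      proof (rule eventually_mono)
        fix n assume "ereal c < DH_set n \<epsilon> (F n) (iid n p) / ereal (real n)"
        then show "l < DH_set n \<epsilon> (F n) (iid n p) / ereal (real n)" using c(1) by simp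
      qed
    qed
  next
    fix u assume u: "D_F F p < u"
    show "\<forall>\<^sub>F n in sequentially. DH_set n \<epsilon> (F n) (iid n p) / ereal (real n) < u"
      by (rule upper_bound[where F=F, OF dist tens p e u])
  qed
  show "(\<forall>\<epsilon>. 0 < \<epsilon> \<and> \<epsilon> < 1 \<longrightarrow>
              ((\<lambda>n. DH_set n \<epsilon> (F n) (iid n p) / ereal (real n)) \<longlonglongrightarrow> D_F F p))
           \<and> ((\<lambda>\<epsilon>. liminf (\<lambda>n. DH_set n \<epsilon> (F n) (iid n p) / ereal (real n)))
                 \<longlongrightarrow> D_F F p) (at_right 0)"
  proof
    show "\<forall>\<epsilon>. 0 < \<epsilon> \<and> \<epsilon> < 1 \<longrightarrow> ((\<lambda>n. DH_set n \<epsilon> (F n) (iid n p) / ereal (real n)) \<longlonglongrightarrow> D_F F p)"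
      using lim by blast
    have ev: "\<forall>\<^sub>F \<epsilon> in at_right 0. D_F F p = liminf (\<lambda>n. DH_set n \<epsilon> (F n) (iid n p) / ereal (real n))"
      using eventually_at_right_real[of 0 "1::real", OF zero_less_one]
    proof (rule eventually_mono)
      fix \<epsilon> :: real assume "\<epsilon> \<in> {0<..<1}"
      then have "0 < \<epsilon>" "\<epsilon> < 1" by auto
      then show "D_F F p = liminf (\<lambda>n. DH_set n \<epsilon> (F n) (iid n p) / ereal (real n))"
        using lim_imp_Liminf[OF trivial_limit_sequentially lim] by simp
    qed
    show "((\<lambda>\<epsilon>. liminf (\<lambda>n. DH_set n \<epsilon> (F n) (iid n p) / ereal (real n))) \<longlongrightarrow> D_F F p) (at_right 0)"
      by (rule Lim_transform_eventually[OF tendsto_const ev])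
  qed
qed

end
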